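(* Fix finite nonempty sets $A$ and $\Omega$, a prior $\mu_0$ on $\Omega$ with $\mu_0(\omega)>0$ for all $\omega$, and a finite message set $M$ with $|M|>\max\{|\Omega|,|A|\}$. Then there is a set of environments of Lebesgue measure one in $[0,1]^{2|A||\Omega|}$ such that, for every environment $(u_S,u_R)$ in this set, commitment is valuable if and only if committed Sender values randomization.
   Context: An environment is a pair $(u_S,u_R)$ of functions $A\times\Omega\to[0,1]$; the set of environments is identified with $[0,1]^{2|A||\Omega|}$. A messaging strategy is a map $\sigma:\Omega\to\Delta M$, written $\sigma(m|\omega)$. An action strategy is a map $\rho:M\to\Delta A$, written $\rho(a|m)$. For $i\in\{S,R\}$ let $U_i(\sigma,\rho)=\sum_{\omega,m,a}\mu_0(\omega)\sigma(m|\omega)\rho(a|m)u_i(a,\omega)$. A profile $(\sigma,\rho)$ is S-BR if $\sigma$ maximizes $U_S(\cdot,\rho)$ over all messaging strategies. It is R-BR if $\rho$ maximizes $U_R(\sigma,\cdot)$ over all action strategies. A persuasion profile is an R-BR profile, and the persuasion payoff is the maximum of $U_S$ over persuasion profiles. A cheap-talk equilibrium is a profile that is both S-BR and R-BR, and the cheap-talk payoff is the maximum of $U_S$ over cheap-talk equilibria. Commitment is valuable if the persuasion payoff is strictly greater than the cheap-talk payoff. A messaging strategy $\sigma$ is partitional if for every $\omega$ there is $m$ with $\sigma(m|\omega)=1$. The partitional persuasion payoff is the maximum of $U_S$ over persuasion profiles $(\sigma,\rho)$ with $\sigma$ partitional. Committed Sender values randomization if the persuasion payoff is strictly greater than the partitional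 persuasion payoff. *)

theory Defs
  imports "HOL-Analysis.Analysis"
begin

text \<open>Actions: type 'a, states: type 'w, messages: type 'm (all finite, nonempty as types).\<close>

definition messaging_strategy :: "('w::finite \<Rightarrow> 'm::finite \<Rightarrow> real) \<Rightarrow> bool" where
  "messaging_strategy \<sigma> \<longleftrightarrow> (\<forall>w m. 0 \<le> \<sigma> w m) \<and> (\<forall>w. (\<Sum>m\<in>UNIV. \<sigma> w m) = 1)"

definition action_strategy :: "('m::finite \<Rightarrow> 'a::finite \<Rightarrow> real) \<Rightarrow> bool" where
  "action_strategy \<rho> \<longleftrightarrow> (\<forall>m a. 0 \<le> \<rho> m a) \<and> (\<forall>m. (\<Sum>a\<in>UNIV. \<rho> m a) = 1)"

definition payoff :: "('w::finite \<Rightarrow> real) \<Rightarrow> ('a::finite \<Rightarrow> 'w \<Rightarrow> real)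
    \<Rightarrow> ('w \<Rightarrow> 'm::finite \<Rightarrow> real) \<Rightarrow> ('m \<Rightarrow> 'a \<Rightarrow> real) \<Rightarrow> real" where
  "payoff \<mu>0 u \<sigma> \<rho> = (\<Sum>w\<in>UNIV. \<Sum>m\<in>UNIV. \<Sum>a\<in>UNIV. \<mu>0 w * \<sigma> w m * \<rho> m a * u a w)"

definition S_BR :: "('w::finite \<Rightarrow> real) \<Rightarrow> ('a::finite \<Rightarrow> 'w \<Rightarrow> real)
    \<Rightarrow> ('w \<Rightarrow> 'm::finite \<Rightarrow> real) \<Rightarrow> ('m \<Rightarrow> 'a \<Rightarrow> real) \<Rightarrow> bool" where
  "S_BR \<mu>0 uS \<sigma> \<rho> \<longleftrightarrow>
     (\<forall>\<sigma>'. messaging_strategy \<sigma>' \<longrightarrow> payoff \<mu>0 uS \<sigma>' \<rho> \<le> payoff \<mu>0 uS \<sigma> \<rho>)"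

definition R_BR :: "('w::finite \<Rightarrow> real) \<Rightarrow> ('a::finite \<Rightarrow> 'w \<Rightarrow> real)
    \<Rightarrow> ('w \<Rightarrow> 'm::finite \<Rightarrow> real) \<Rightarrow> ('m \<Rightarrow> 'a \<Rightarrow> real) \<Rightarrow> bool" where
  "R_BR \<mu>0 uR \<sigma> \<rho> \<longleftrightarrow>
     (\<forall>\<rho>'. action_strategy \<rho>' \<longrightarrow> payoff \<mu>0 uR \<sigma> \<rho>' \<le> payoff \<mu>0 uR \<sigma> \<rho>)"

definition profile :: "('w::finite \<Rightarrow> 'm::finite \<Rightarrow> real) \<Rightarrow> ('m \<Rightarrow> 'a::finite \<Rightarrow> real) \<Rightarrow> bool" where
  "profile \<sigma> \<rho> \<longleftrightarrow> messaging_strategy \<sigma> \<and> action_strategy \<rho>"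

definition partitional :: "('w::finite \<Rightarrow> 'm::finite \<Rightarrow> real) \<Rightarrow> bool" where
  "partitional \<sigma> \<longleftrightarrow> (\<forall>w. \<exists>m. \<sigma> w m = 1)"

text \<open>The message type is fixed by the itself-argument.\<close>
definition persuasion_payoff :: "'m::finite itself \<Rightarrow> ('w::finite \<Rightarrow> real)
    \<Rightarrow> ('a::finite \<Rightarrow> 'w \<Rightarrow> real) \<Rightarrow> ('a \<Rightarrow> 'w \<Rightarrow> real) \<Rightarrow> real" where
  "persuasion_payoff M \<mu>0 uS uR =
     Sup {payoff \<mu>0 uS \<sigma> \<rho> | (\<sigma> :: 'w \<Rightarrow> 'm \<Rightarrow> real) \<rho>.
            profile \<sigma> \<rho> \<and> R_BR \<mu>0 uR \<sigma> \<rho>}"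

definition partitional_persuasion_payoff :: "'m::finite itself \<Rightarrow> ('w::finite \<Rightarrow> real)
    \<Rightarrow> ('a::finite \<Rightarrow> 'w \<Rightarrow> real) \<Rightarrow> ('a \<Rightarrow> 'w \<Rightarrow> real) \<Rightarrow> real" where
  "partitional_persuasion_payoff M \<mu>0 uS uR =
     Sup {payoff \<mu>0 uS \<sigma> \<rho> | (\<sigma> :: 'w \<Rightarrow> 'm \<Rightarrow> real) \<rho>.
            profile \<sigma> \<rho> \<and> R_BR \<mu>0 uR \<sigma> \<rho> \<and> partitional \<sigma>}"

definition cheap_talk_payoff :: "'m::finite itself \<Rightarrow> ('w::finite \<Rightarrow> real)
    \<Rightarrow> ('a::finite \<Rightarrow> 'w \<Rightarrow> real) \<Rightarrow> ('a \<Rightarrow> 'w \<Rightarrow> real) \<Rightarrow> real" where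
  "cheap_talk_payoff M \<mu>0 uS uR =
     Sup {payoff \<mu>0 uS \<sigma> \<rho> | (\<sigma> :: 'w \<Rightarrow> 'm \<Rightarrow> real) \<rho>.
            profile \<sigma> \<rho> \<and> S_BR \<mu>0 uS \<sigma> \<rho> \<and> R_BR \<mu>0 uR \<sigma> \<rho>}"

definition commitment_valuable :: "'m::finite itself \<Rightarrow> ('w::finite \<Rightarrow> real)
    \<Rightarrow> ('a::finite \<Rightarrow> 'w \<Rightarrow> real) \<Rightarrow> ('a \<Rightarrow> 'w \<Rightarrow> real) \<Rightarrow> bool" where
  "commitment_valuable M \<mu>0 uS uR \<longleftrightarrow>
     persuasion_payoff M \<mu>0 uS uR > cheap_talk_payoff M \<mu>0 uS uR"

definition values_randomization :: "'m::finite itself \<Rightarrow> ('w::finite \<Rightarrow> real)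
    \<Rightarrow> ('a::finite \<Rightarrow> 'w \<Rightarrow> real) \<Rightarrow> ('a \<Rightarrow> 'w \<Rightarrow> real) \<Rightarrow> bool" where
  "values_randomization M \<mu>0 uS uR \<longleftrightarrow>
     persuasion_payoff M \<mu>0 uS uR > partitional_persuasion_payoff M \<mu>0 uS uR"

text \<open>An environment is a point of [0,1]^(2|A||Omega|), coded as a function on
  bool \<times> A \<times> Omega: True-coordinates give u_S, False-coordinates give u_R.\<close>
definition env_S :: "(bool \<times> 'a \<times> 'w \<Rightarrow> real) \<Rightarrow> 'a \<Rightarrow> 'w \<Rightarrow> real" where
  "env_S e a w = e (True, a, w)"

definition env_R :: "(bool \<times> 'a \<times> 'w \<Rightarrow> real) \<Rightarrow> 'a \<Rightarrow> 'w \<Rightarrow> real" where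
  "env_R e a w = e (False, a, w)"


end

theory Submission
  imports Defs
begin

lemma graph_null:
  fixes f :: "('i::finite \<Rightarrow> real) \<Rightarrow> real" and i :: 'i
  assumes fm: "f \<in> borel_measurable (PiM UNIV (\<lambda>_. lborel))"
    and indep: "\<And>x y. f (x(i := y)) = f x"
  shows "{x. x i = f x} \<in> sets (PiM UNIV (\<lambda>_. lborel))"
    and "emeasure (PiM UNIV (\<lambda>_. lborel)) {x. x i = f x} = 0"
proof -
  interpret product_sigma_finite "\<lambda>_::'i. lborel"
    by standard
  have meas: "{x. x i = f x} \<in> sets (PiM UNIV (\<lambda>_. lborel))"
  proof -
    have "{x \<in> space (PiM UNIV (\<lambda>_. lborel)). x i = f x} \<in> sets (PiM UNIV (\<lambda>_. lborel))"
      using fm by measurable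
    then show ?thesis by (simp add: space_PiM)
  qed
  then show "{x. x i = f x} \<in> sets (PiM UNIV (\<lambda>_. lborel))" .
  let ?G = "{x. x i = f x}"
  have U: "(UNIV::'i set) = insert i (UNIV - {i})" by auto
  have "emeasure (PiM UNIV (\<lambda>_. lborel)) ?G = (\<integral>\<^sup>+ x. indicator ?G x \<partial>(PiM UNIV (\<lambda>_. lborel)))"
    using meas by simp
  also have "\<dots> = (\<integral>\<^sup>+ x. (\<integral>\<^sup>+ y. indicator ?G (x(i := y)) \<partial>lborel) \<partial>(PiM (UNIV - {i}) (\<lambda>_. lborel)))"
    apply (subst U)
    apply (rule product_nn_integral_insert)
    using meas U by (auto simp del: insert_Diff_single)
  also have "\<dots> = (\<integral>\<^sup>+ x. (\<integral>\<^sup>+ y. indicator {f x} y \<partial>lborel) \<partial>(PiM (UNIV - {i}) (\<lambda>_. lborel)))"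
    by (intro nn_integral_cong) (auto simp: indicator_def indep)
  also have "\<dots> = 0" by simp
  finally show "emeasure (PiM UNIV (\<lambda>_. lborel)) ?G = 0" .
qed

type_synonym ('a,'w) lbl = "'w + ('a \<times> 'w) + ('a \<times> 'a)"

definition rowv :: "('w::finite \<Rightarrow> real) \<Rightarrow> ('a::finite \<Rightarrow> 'w \<Rightarrow> real) \<Rightarrow> ('a,'w) lbl \<Rightarrow> real^('a \<times> 'w)" where
  "rowv \<mu> uR l = (case l of Inl w \<Rightarrow> (\<chi> k. if snd k = w then 1 else 0)
     | Inr (Inl j) \<Rightarrow> (\<chi> k. if k = j then 1 else 0)
     | Inr (Inr xy) \<Rightarrow> (\<chi> k. if fst k = fst xy then \<mu> (snd k) * (uR (fst xy) (snd k) - uR (snd xy) (snd k)) else 0))"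

definition rhs :: "('a,'w) lbl \<Rightarrow> real" where
  "rhs l = (case l of Inl _ \<Rightarrow> 1 | _ \<Rightarrow> 0)"

definition isEq :: "('a,'w) lbl \<Rightarrow> bool" where
  "isEq l = (case l of Inl _ \<Rightarrow> True | _ \<Rightarrow> False)"

definition Pset :: "('w::finite \<Rightarrow> real) \<Rightarrow> ('a::finite \<Rightarrow> 'w \<Rightarrow> real) \<Rightarrow> (real^('a \<times> 'w)) set" where
  "Pset \<mu> uR = {p. \<forall>l. (isEq l \<longrightarrow> rowv \<mu> uR l \<bullet> p = rhs l) \<and> rhs l \<le> rowv \<mu> uR l \<bullet> p}"

definition cvec :: "('w::finite \<Rightarrow> real) \<Rightarrow> ('a::finite \<Rightarrow> 'w \<Rightarrow> real) \<Rightarrow> real^('a \<times> 'w)" where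
  "cvec \<mu> uS = (\<chi> k. \<mu> (snd k) * uS (fst k) (snd k))"

definition optset where
  "optset \<mu> uS uR = {p \<in> Pset \<mu> uR. \<forall>q\<in>Pset \<mu> uR. cvec \<mu> uS \<bullet> q \<le> cvec \<mu> uS \<bullet> p}"

lemma Pset_alt: "Pset \<mu> uR = (\<Inter>l. {p. (isEq l \<longrightarrow> rowv \<mu> uR l \<bullet> p = rhs l)} \<inter> {p. rhs l \<le> rowv \<mu> uR l \<bullet> p})"
  unfolding Pset_def by auto

lemma closed_Pset: "closed (Pset \<mu> uR)"
proof -
  have "closed ({p. (isEq l \<longrightarrow> rowv \<mu> uR l \<bullet> p = rhs l)} \<inter> {p. rhs l \<le> rowv \<mu> uR l \<bullet> p})" for l
    by (cases "isEq l") (auto intro!: closed_Int closed_hyperplane closed_halfspace_ge)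
  then show ?thesis unfolding Pset_alt by (intro closed_INT) auto
qed

lemma convex_Pset: "convex (Pset \<mu> uR)"
proof -
  have "convex ({p. (isEq l \<longrightarrow> rowv \<mu> uR l \<bullet> p = rhs l)} \<inter> {p. rhs l \<le> rowv \<mu> uR l \<bullet> p})" for l
    by (cases "isEq l") (auto intro!: convex_Int convex_hyperplane convex_halfspace_ge)
  then show ?thesis unfolding Pset_alt by (intro convex_INT) auto
qed

lemma rowv_Nn: "rowv \<mu> uR (Inr (Inl j)) \<bullet> p = p $ j"
proof -
  have "rowv \<mu> uR (Inr (Inl j)) \<bullet> p = (\<Sum>i\<in>UNIV. (if i = j then p $ i else 0))"
    unfolding rowv_def inner_vec_def by (simp add: if_distrib[of "\<lambda>x. x * _"] cong: if_cong)
  then show ?thesis by simp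
qed

lemma rowv_Eq: "rowv \<mu> uR (Inl w) \<bullet> p = (\<Sum>k\<in>{k. snd k = w}. p $ k)"
proof -
  have "rowv \<mu> uR (Inl w) \<bullet> p = (\<Sum>i\<in>UNIV. (if snd i = w then p $ i else 0))"
    unfolding rowv_def inner_vec_def by (auto intro!: sum.cong)
  then show ?thesis by (simp add: sum.If_cases)
qed

lemma sum_fst_if: "(\<Sum>i\<in>(UNIV::('a::finite\<times>'b::finite) set). (if fst i = x then g i else (0::real))) = (\<Sum>w\<in>UNIV. g (x,w))"
proof -
  have "(\<Sum>i\<in>(UNIV::('a\<times>'b) set). (if fst i = x then g i else (0::real))) = (\<Sum>a\<in>UNIV. \<Sum>w\<in>UNIV. (if a = x then g (a,w) else (0::real)))"
    by (simp add: sum.cartesian_product UNIV_Times_UNIV[symmetric] case_prod_unfold del: UNIV_Times_UNIV cong: if_cong; rule sum.cong; auto)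
  also have "\<dots> = (\<Sum>w\<in>UNIV. g (x,w))" by (subst sum.swap) (simp add: sum.delta)
  finally show ?thesis .
qed

lemma rowv_Ob: "rowv \<mu> uR (Inr (Inr (x,y))) \<bullet> p = (\<Sum>w\<in>UNIV. \<mu> w * (uR x w - uR y w) * p $ (x,w))"
proof -
  have "rowv \<mu> uR (Inr (Inr (x,y))) \<bullet> p = (\<Sum>i\<in>UNIV. (if fst i = x then \<mu> (snd i) * (uR x (snd i) - uR y (snd i)) * p $ i else 0))"
    unfolding rowv_def inner_vec_def by (auto intro!: sum.cong)
  also have "\<dots> = (\<Sum>w\<in>UNIV. \<mu> w * (uR x w - uR y w) * p $ (x,w))"
    by (subst sum_fst_if) simp
  finally show ?thesis .
qed

lemma Pset_iff: "p \<in> Pset \<mu> uR \<longleftrightarrow> (\<forall>j. 0 \<le> p $ j) \<and> (\<forall>w. (\<Sum>k\<in>{k. snd k = w}. p $ k) = 1)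
   \<and> (\<forall>x y. 0 \<le> (\<Sum>w\<in>UNIV. \<mu> w * (uR x w - uR y w) * p $ (x,w)))"
proof
  assume p: "p \<in> Pset \<mu> uR"
  then have A: "\<And>l. (isEq l \<longrightarrow> rowv \<mu> uR l \<bullet> p = rhs l) \<and> rhs l \<le> rowv \<mu> uR l \<bullet> p"
    unfolding Pset_def by blast
  show "(\<forall>j. 0 \<le> p $ j) \<and> (\<forall>w. (\<Sum>k\<in>{k. snd k = w}. p $ k) = 1)
   \<and> (\<forall>x y. 0 \<le> (\<Sum>w\<in>UNIV. \<mu> w * (uR x w - uR y w) * p $ (x,w)))"
  proof (intro conjI allI)
    fix j show "0 \<le> p $ j" using A[of "Inr (Inl j)"] by (simp add: rowv_Nn rhs_def)
  next
    fix w show "(\<Sum>k\<in>{k. snd k = w}. p $ k) = 1" using A[of "Inl w"] by (simp add: rowv_Eq rhs_def isEq_def)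
  next
    fix x y show "0 \<le> (\<Sum>w\<in>UNIV. \<mu> w * (uR x w - uR y w) * p $ (x,w))"
      using A[of "Inr (Inr (x,y))"] by (simp add: rowv_Ob rhs_def)
  qed
next
  assume H: "(\<forall>j. 0 \<le> p $ j) \<and> (\<forall>w. (\<Sum>k\<in>{k. snd k = w}. p $ k) = 1)
   \<and> (\<forall>x y. 0 \<le> (\<Sum>w\<in>UNIV. \<mu> w * (uR x w - uR y w) * p $ (x,w)))"
  show "p \<in> Pset \<mu> uR" unfolding Pset_def
  proof (intro CollectI allI)
    fix l :: "('a,'b) lbl"
    show "(isEq l \<longrightarrow> rowv \<mu> uR l \<bullet> p = rhs l) \<and> rhs l \<le> rowv \<mu> uR l \<bullet> p"
    proof -
      consider (a) w where "l = Inl w" | (b) j where "l = Inr (Inl j)" | (c) x y where "l = Inr (Inr (x,y))"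
        by (metis sumE surj_pair)
      then show ?thesis using H by cases (auto simp: rowv_Nn rowv_Eq rowv_Ob rhs_def isEq_def)
    qed
  qed
qed

lemma Pset_nonneg: "p \<in> Pset \<mu> uR \<Longrightarrow> 0 \<le> p $ j"
  by (cases j) (simp add: Pset_iff)

lemma Pset_sum: "p \<in> Pset \<mu> uR \<Longrightarrow> (\<Sum>k\<in>{k. snd k = w}. p $ k) = 1"
  by (simp add: Pset_iff)

lemma Pset_le1: "p \<in> Pset \<mu> uR \<Longrightarrow> p $ j \<le> 1"
proof -
  assume p: "p \<in> Pset \<mu> uR"
  have "p $ j \<le> (\<Sum>k\<in>{k. snd k = snd j}. p $ k)"
    by (rule member_le_sum) (auto simp: Pset_nonneg[OF p])
  then show ?thesis using Pset_sum[OF p] by simp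
qed

lemma bounded_Pset: "bounded (Pset \<mu> uR)"
proof -
  have "Pset \<mu> uR \<subseteq> cbox 0 1"
    by (auto simp: mem_box_cart Pset_nonneg Pset_le1)
  then show ?thesis using bounded_cbox bounded_subset by blast
qed

lemma optset_alt: "optset \<mu> uS uR = Pset \<mu> uR \<inter> (\<Inter>q\<in>Pset \<mu> uR. {p. cvec \<mu> uS \<bullet> p \<ge> cvec \<mu> uS \<bullet> q})"
  unfolding optset_def by auto

lemma compact_optset: "compact (optset \<mu> uS uR)"
  unfolding optset_alt
  unfolding compact_eq_bounded_closed
proof
  show "closed (Pset \<mu> uR \<inter> (\<Inter>q\<in>Pset \<mu> uR. {p. cvec \<mu> uS \<bullet> q \<le> cvec \<mu> uS \<bullet> p}))"
    by (intro closed_Int closed_Pset closed_INT ballI closed_halfspace_ge)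
  show "bounded (Pset \<mu> uR \<inter> (\<Inter>q\<in>Pset \<mu> uR. {p. cvec \<mu> uS \<bullet> q \<le> cvec \<mu> uS \<bullet> p}))"
    using bounded_Pset bounded_Int by blast
qed

lemma convex_optset: "convex (optset \<mu> uS uR)"
  unfolding optset_alt
  by (intro convex_Int convex_Pset convex_INT convex_halfspace_ge) 

definition actset where "actset \<mu> uR p = {l. rowv \<mu> uR l \<bullet> p = rhs l}"

lemma extreme_nullspace:
  assumes ext: "p extreme_point_of optset \<mu> uS uR"
    and dz: "\<And>l. l \<in> actset \<mu> uR p \<Longrightarrow> rowv \<mu> uR l \<bullet> d = 0"
  shows "d = 0"
proof (rule ccontr)
  assume d0: "d \<noteq> 0"
  let ?r = "rowv \<mu> uR" and ?c = "cvec \<mu> uS"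
  have pO: "p \<in> optset \<mu> uS uR" using ext by (simp add: extreme_point_of_def)
  then have pP: "p \<in> Pset \<mu> uR" by (simp add: optset_def)
  then have cons: "\<And>l. (isEq l \<longrightarrow> ?r l \<bullet> p = rhs l) \<and> rhs l \<le> ?r l \<bullet> p" unfolding Pset_def by blast
  define I where "I = {l. l \<notin> actset \<mu> uR p}"
  have slack: "l \<in> I \<Longrightarrow> rhs l < ?r l \<bullet> p" for l
    using cons[of l] by (auto simp: I_def actset_def)
  define \<epsilon> where "\<epsilon> = Min (insert 1 ((\<lambda>l. (?r l \<bullet> p - rhs l) / (\<bar>?r l \<bullet> d\<bar> + 1)) ` I))"
  have epos: "\<epsilon> > 0" unfolding \<epsilon>_def
    by (subst Min_gr_iff) (auto intro!: divide_pos_pos simp: slack add_nonneg_pos)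
  have ele: "\<epsilon> * \<bar>?r l \<bullet> d\<bar> \<le> ?r l \<bullet> p - rhs l" if "l \<in> I" for l
  proof -
    have "\<epsilon> \<le> (?r l \<bullet> p - rhs l) / (\<bar>?r l \<bullet> d\<bar> + 1)" unfolding \<epsilon>_def
      using that by (intro Min_le) auto
    then have "\<epsilon> * (\<bar>?r l \<bullet> d\<bar> + 1) \<le> ?r l \<bullet> p - rhs l"
      by (simp add: le_divide_eq add_nonneg_pos)
    then show ?thesis using epos by (simp add: algebra_simps)
  qed
  have inP: "p + t *\<^sub>R d \<in> Pset \<mu> uR" if "\<bar>t\<bar> \<le> \<epsilon>" for t
    unfolding Pset_def
  proof (intro CollectI allI)
    fix l
    show "(isEq l \<longrightarrow> ?r l \<bullet> (p + t *\<^sub>R d) = rhs l) \<and> rhs l \<le> ?r l \<bullet> (p + t *\<^sub>R d)"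
    proof (cases "l \<in> actset \<mu> uR p")
      case True
      then show ?thesis using dz[OF True] by (simp add: inner_add_right actset_def)
    next
      case False
      then have lI: "l \<in> I" by (simp add: I_def)
      have nE: "\<not> isEq l" using cons[of l] False by (auto simp: actset_def)
      have "\<bar>t * (?r l \<bullet> d)\<bar> \<le> \<epsilon> * \<bar>?r l \<bullet> d\<bar>"
        using that by (simp add: abs_mult mult_right_mono)
      then have "- (t * (?r l \<bullet> d)) \<le> ?r l \<bullet> p - rhs l" using ele[OF lI] by linarith
      then show ?thesis using nE by (simp add: inner_add_right)
    qed
  qed
  have q1: "p + \<epsilon> *\<^sub>R d \<in> Pset \<mu> uR" by (rule inP) (use epos in simp)
  have q2: "p + (-\<epsilon>) *\<^sub>R d \<in> Pset \<mu> uR" by (rule inP) (use epos in simp)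
  have "?c \<bullet> (p + \<epsilon> *\<^sub>R d) \<le> ?c \<bullet> p" "?c \<bullet> (p + (-\<epsilon>) *\<^sub>R d) \<le> ?c \<bullet> p"
    using pO q1 q2 by (auto simp: optset_def)
  then have cd: "?c \<bullet> d = 0" using epos
  proof -
    from \<open>?c \<bullet> (p + \<epsilon> *\<^sub>R d) \<le> ?c \<bullet> p\<close> have "\<epsilon> * (?c \<bullet> d) \<le> 0" by (simp add: inner_add_right)
    then have a: "?c \<bullet> d \<le> 0" using epos by (simp add: mult_le_0_iff)
    from \<open>?c \<bullet> (p + (-\<epsilon>) *\<^sub>R d) \<le> ?c \<bullet> p\<close> have "0 \<le> \<epsilon> * (?c \<bullet> d)" by (simp add: inner_add_right inner_diff_right)
    then have "0 \<le> ?c \<bullet> d" using epos by (simp add: zero_le_mult_iff)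
    with a show ?thesis by simp
  qed
  have q1O: "p + \<epsilon> *\<^sub>R d \<in> optset \<mu> uS uR" and q2O: "p + (-\<epsilon>) *\<^sub>R d \<in> optset \<mu> uS uR"
    using q1 q2 pO cd by (auto simp: optset_def inner_add_right inner_diff_right)
  have "midpoint (p + (-\<epsilon>) *\<^sub>R d) (p + \<epsilon> *\<^sub>R d) = p"
  proof -
    have "p + (-\<epsilon>) *\<^sub>R d + (p + \<epsilon> *\<^sub>R d) = 2 *\<^sub>R p"
      by (simp add: scaleR_2)
    then show ?thesis by (simp add: midpoint_def)
  qed
  moreover have "p + (-\<epsilon>) *\<^sub>R d \<noteq> p + \<epsilon> *\<^sub>R d"
  proof
    assume "p + (-\<epsilon>) *\<^sub>R d = p + \<epsilon> *\<^sub>R d"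
    then have "\<forall>i. d $ i = 0" using epos by (auto simp: vec_eq_iff)
    then show False using d0 by (simp add: vec_eq_iff)
  qed
  ultimately have "p \<in> open_segment (p + (-\<epsilon>) *\<^sub>R d) (p + \<epsilon> *\<^sub>R d)"
    using midpoint_in_open_segment by metis
  then show False using ext q1O q2O unfolding extreme_point_of_def by blast
qed

definition gram where
  "gram \<mu> uR A = (\<chi> i j. \<Sum>l\<in>A. rowv \<mu> uR l $ i * rowv \<mu> uR l $ j)"

definition hvec where
  "hvec \<mu> uR A = (\<chi> i. \<Sum>l\<in>A. rhs l * rowv \<mu> uR l $ i)"

definition solv where
  "solv \<mu> uR A = (\<chi> k. det (\<chi> i j. if j = k then hvec \<mu> uR A $ i else gram \<mu> uR A $ i $ j) / det (gram \<mu> uR A))"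

lemma gram_mult: "gram \<mu> uR A *v d = (\<chi> i. \<Sum>l\<in>A. rowv \<mu> uR l $ i * (rowv \<mu> uR l \<bullet> d))"
  unfolding gram_def matrix_vector_mult_def inner_vec_def
  by (simp add: sum_distrib_left sum_distrib_right mult.assoc) (subst sum.swap, simp)

lemma gram_det:
  assumes "\<And>d. (\<And>l. l \<in> A \<Longrightarrow> rowv \<mu> uR l \<bullet> d = 0) \<Longrightarrow> d = 0"
  shows "det (gram \<mu> uR A) \<noteq> 0"
proof -
  let ?G = "gram \<mu> uR A"
  have z: "d = 0" if "?G *v d = 0" for d
  proof -
    have "d \<bullet> (?G *v d) = (\<Sum>l\<in>A. (rowv \<mu> uR l \<bullet> d)^2)"
      unfolding gram_mult inner_vec_def
      by (simp add: sum_distrib_left power2_eq_square mult.commute mult.left_commute)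
        (subst sum.swap, simp add: sum_distrib_left mult.commute mult.left_commute)
    then have "(\<Sum>l\<in>A. (rowv \<mu> uR l \<bullet> d)^2) = 0" using that by simp
    then have "\<And>l. l \<in> A \<Longrightarrow> rowv \<mu> uR l \<bullet> d = 0"
      by (subst (asm) sum_nonneg_eq_0_iff) auto
    then show ?thesis by (rule assms)
  qed
  have "inj (\<lambda>x. ?G *v x)"
  proof (rule injI)
    fix x y assume "?G *v x = ?G *v y"
    then have "?G *v (x - y) = 0" by (simp add: matrix_vector_mult_diff_distrib)
    then show "x = y" using z[of "x - y"] by simp
  qed
  then show ?thesis
    using det_nz_iff_inj[of "\<lambda>x. ?G *v x"] by simp
qed

lemma gram_solve:
  assumes "A \<subseteq> actset \<mu> uR p"
  shows "gram \<mu> uR A *v p = hvec \<mu> uR A"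
  using assms unfolding gram_mult hvec_def actset_def
  by (auto simp: vec_eq_iff mult.commute intro!: sum.cong)

lemma extreme_solv:
  assumes ext: "p extreme_point_of optset \<mu> uS uR"
  shows "det (gram \<mu> uR (actset \<mu> uR p)) \<noteq> 0" and "p = solv \<mu> uR (actset \<mu> uR p)"
proof -
  show d: "det (gram \<mu> uR (actset \<mu> uR p)) \<noteq> 0"
    by (rule gram_det) (rule extreme_nullspace[OF ext], auto)
  have "gram \<mu> uR (actset \<mu> uR p) *v p = hvec \<mu> uR (actset \<mu> uR p)"
    by (rule gram_solve) simp
  then show "p = solv \<mu> uR (actset \<mu> uR p)"
    unfolding solv_def using cramer[OF d] by blast
qed

lemma two_opt:
  assumes "p1 \<in> optset \<mu> uS uR" "p2 \<in> optset \<mu> uS uR" "p1 \<noteq> p2"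
  shows "\<exists>A1 A2 k. det (gram \<mu> uR A1) \<noteq> 0 \<and> det (gram \<mu> uR A2) \<noteq> 0 \<and>
     solv \<mu> uR A1 $ k \<noteq> solv \<mu> uR A2 $ k \<and> cvec \<mu> uS \<bullet> solv \<mu> uR A1 = cvec \<mu> uS \<bullet> solv \<mu> uR A2"
proof -
  let ?O = "optset \<mu> uS uR"
  let ?E = "{x. x extreme_point_of ?O}"
  have KM: "?O = convex hull ?E"
    by (rule Krein_Milman_Minkowski[OF compact_optset convex_optset])
  have "\<exists>v1 v2. v1 \<in> ?E \<and> v2 \<in> ?E \<and> v1 \<noteq> v2"
  proof (rule ccontr)
    assume "\<not> ?thesis"
    then have "\<exists>v. ?E \<subseteq> {v}" by blast
    then obtain v where "?E \<subseteq> {v}" by blast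
    then have "convex hull ?E \<subseteq> {v}"
      by (metis convex_hull_singleton hull_mono)
    then show False using assms KM by auto
  qed
  then obtain v1 v2 where v: "v1 extreme_point_of ?O" "v2 extreme_point_of ?O" "v1 \<noteq> v2" by blast
  then obtain k where k: "v1 $ k \<noteq> v2 $ k" by (metis vec_eq_iff)
  have vO: "v1 \<in> ?O" "v2 \<in> ?O" using v by (auto simp: extreme_point_of_def)
  then have "cvec \<mu> uS \<bullet> v1 = cvec \<mu> uS \<bullet> v2" unfolding optset_def by (auto intro: antisym)
  then show ?thesis
    using extreme_solv[OF v(1)] extreme_solv[OF v(2)] k by metis
qed

abbreviation "PM \<equiv> PiM (UNIV :: (bool \<times> 'a::finite \<times> 'w::finite) set) (\<lambda>_. lborel)"

lemma meas_det:
  fixes M :: "'x \<Rightarrow> real^'n^'n"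
  assumes "\<And>i j. (\<lambda>x. M x $ i $ j) \<in> borel_measurable N"
  shows "(\<lambda>x. det (M x)) \<in> borel_measurable N"
  unfolding det_def using assms by measurable

lemma meas_comp: "(\<lambda>e. e i) \<in> borel_measurable (PiM UNIV (\<lambda>_. lborel))"
  by measurable

lemma rowv_comp: "rowv \<mu> (env_R e) l $ i = (case l of Inl w \<Rightarrow> (if snd i = w then 1 else 0)
     | Inr (Inl j) \<Rightarrow> (if i = j then 1 else 0)
     | Inr (Inr xy) \<Rightarrow> (if fst i = fst xy then \<mu> (snd i) * (e (False, fst xy, snd i) - e (False, snd xy, snd i)) else 0))"
  by (simp add: rowv_def env_R_def split: sum.splits)

lemma meas_rowv: "(\<lambda>e. rowv \<mu> (env_R e) l $ i) \<in> borel_measurable (PM :: ((bool \<times> 'a::finite \<times> 'w::finite) \<Rightarrow> real) measure)"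
proof -
  consider (a) w where "l = Inl w" | (b) j where "l = Inr (Inl j)" | (c) xy where "l = Inr (Inr xy)"
    by (metis sumE)
  then show ?thesis unfolding rowv_comp
    by cases (simp_all, (cases "fst i = fst xy"; simp)?)
qed

lemma sets_PM_borel: "sets (PiM (UNIV::'i set) (\<lambda>_. lborel)) = sets (PiM UNIV (\<lambda>_. borel))"
  by (rule sets_PiM_cong) simp_all

lemma meas_rowv'[measurable]: "(\<lambda>e. rowv \<mu> (env_R e) l $ i) \<in> borel_measurable (PiM UNIV (\<lambda>_. borel) :: ((bool \<times> 'a::finite \<times> 'w::finite) \<Rightarrow> real) measure)"
  using meas_rowv[of \<mu> l i] measurable_cong_sets[OF sets_PM_borel refl] by blast

lemma meas_solv: "(\<lambda>e. solv \<mu> (env_R e) A $ k) \<in> borel_measurable (PM :: ((bool \<times> 'a::finite \<times> 'w::finite) \<Rightarrow> real) measure)"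
proof -
  have g: "(\<lambda>e. gram \<mu> (env_R e) A $ i $ j) \<in> borel_measurable (PM :: ((bool \<times> 'a \<times> 'w) \<Rightarrow> real) measure)" for i j
    unfolding gram_def by simp measurable
  have h: "(\<lambda>e. hvec \<mu> (env_R e) A $ i) \<in> borel_measurable (PM :: ((bool \<times> 'a \<times> 'w) \<Rightarrow> real) measure)" for i
    unfolding hvec_def by simp measurable
  have "(\<lambda>e. det (\<chi> i j. if j = k then hvec \<mu> (env_R e) A $ i else gram \<mu> (env_R e) A $ i $ j)) \<in> borel_measurable (PM :: ((bool \<times> 'a \<times> 'w) \<Rightarrow> real) measure)"
    by (rule meas_det, rename_tac i j, case_tac "j = k") (simp_all add: g h)
  moreover have "(\<lambda>e. det (gram \<mu> (env_R e) A)) \<in> borel_measurable (PM :: ((bool \<times> 'a \<times> 'w) \<Rightarrow> real) measure)"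
    by (rule meas_det) (simp add: g)
  ultimately show ?thesis unfolding solv_def by simp measurable
qed

lemma null_graph:
  fixes f :: "('i::finite \<Rightarrow> real) \<Rightarrow> real" and i :: 'i
  assumes "f \<in> borel_measurable (PiM UNIV (\<lambda>_. lborel))"
    and "\<And>x y. f (x(i := y)) = f x"
  shows "{x. x i = f x} \<in> null_sets (PiM UNIV (\<lambda>_. lborel))"
  using graph_null[OF assms] by auto

lemma env_R_upd_True: "env_R (e((True, z) := y)) = env_R e"
  by (auto simp: env_R_def fun_eq_iff)

definition F1 where
  "F1 \<mu> A1 A2 k e = - (\<Sum>j\<in>UNIV - {k}. \<mu> (snd j) * e (True, fst j, snd j) * (solv \<mu> (env_R e) A1 $ j - solv \<mu> (env_R e) A2 $ j))
      / (\<mu> (snd k) * (solv \<mu> (env_R e) A1 $ k - solv \<mu> (env_R e) A2 $ k))"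

lemma null_F1: "{e. e (True, fst k, snd k) = F1 \<mu> A1 A2 k e} \<in> null_sets (PM :: ((bool \<times> 'a::finite \<times> 'w::finite) \<Rightarrow> real) measure)"
proof (rule null_graph)
  show "F1 \<mu> A1 A2 k \<in> borel_measurable (PM :: ((bool \<times> 'a \<times> 'w) \<Rightarrow> real) measure)"
    unfolding F1_def using meas_solv by measurable
  fix x :: "bool \<times> 'a \<times> 'w \<Rightarrow> real" and y
  show "F1 \<mu> A1 A2 k (x((True, fst k, snd k) := y)) = F1 \<mu> A1 A2 k x"
    unfolding F1_def env_R_upd_True
    by (intro arg_cong2[where f = "(/)"] arg_cong[where f = uminus] sum.cong refl)
       (auto simp: prod_eq_iff)
qed

lemma null_G1: "a \<noteq> a' \<Longrightarrow> {e. e (True, a, w) = e (True, a', w)} \<in> null_sets (PM :: ((bool \<times> 'a::finite \<times> 'w::finite) \<Rightarrow> real) measure)"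
  by (rule null_graph[where f = "\<lambda>e. e (True, a', w)", simplified]) auto

definition F3 where
  "F3 \<mu> S v0 z y e = e (False, y, v0) - (\<Sum>v\<in>S - {v0}. \<mu> v * (e (False, z, v) - e (False, y, v))) / \<mu> v0"

lemma null_F3: "z \<noteq> y \<Longrightarrow> {e. e (False, z, v0) = F3 \<mu> S v0 z y e} \<in> null_sets (PM :: ((bool \<times> 'a::finite \<times> 'w::finite) \<Rightarrow> real) measure)"
proof (rule null_graph)
  show "F3 \<mu> S v0 z y \<in> borel_measurable (PM :: ((bool \<times> 'a \<times> 'w) \<Rightarrow> real) measure)"
    unfolding F3_def by measurable
  fix x :: "bool \<times> 'a \<times> 'w \<Rightarrow> real" and t
  assume "z \<noteq> y"
  then show "F3 \<mu> S v0 z y (x((False, z, v0) := t)) = F3 \<mu> S v0 z y x"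
    unfolding F3_def
    by (intro arg_cong2[where f = "(-)"] arg_cong2[where f = "(/)"] sum.cong refl) auto
qed

definition gen :: "('w::finite \<Rightarrow> real) \<Rightarrow> (bool \<times> 'a::finite \<times> 'w \<Rightarrow> real) \<Rightarrow> bool" where
  "gen \<mu> e \<longleftrightarrow> (\<forall>w a a'. a \<noteq> a' \<longrightarrow> env_S e a w \<noteq> env_S e a' w) \<and>
     (\<forall>S z y. S \<noteq> {} \<longrightarrow> z \<noteq> y \<longrightarrow> (\<Sum>v\<in>S. \<mu> v * (env_R e z v - env_R e y v)) \<noteq> 0) \<and>
     (\<forall>p1 p2. p1 \<in> optset \<mu> (env_S e) (env_R e) \<longrightarrow> p2 \<in> optset \<mu> (env_S e) (env_R e) \<longrightarrow> p1 = p2)"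

lemma cvec_inner: "cvec \<mu> uS \<bullet> p = (\<Sum>j\<in>UNIV. \<mu> (snd j) * uS (fst j) (snd j) * p $ j)"
  unfolding cvec_def inner_vec_def by simp

lemma gen_ex:
  fixes \<mu> :: "'w::finite \<Rightarrow> real"
  assumes mpos: "\<forall>w. \<mu> w > 0"
  shows "\<exists>E \<in> sets (PM :: ((bool \<times> 'a::finite \<times> 'w) \<Rightarrow> real) measure).
     E \<subseteq> {e. \<forall>i. e i \<in> {0..1}} \<and> emeasure PM E = 1 \<and> (\<forall>e\<in>E. gen \<mu> e)"
proof -
  define Z1 where "Z1 = (\<Union>(A1,A2,k)\<in>(UNIV :: (('a,'w) lbl set \<times> ('a,'w) lbl set \<times> ('a \<times> 'w)) set).
       {e :: bool \<times> 'a \<times> 'w \<Rightarrow> real. e (True, fst k, snd k) = F1 \<mu> A1 A2 k e})"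
  define Z2 where "Z2 = (\<Union>(w,a,a')\<in>{(w::'w,a::'a,a'). a \<noteq> a'}.
       {e :: bool \<times> 'a \<times> 'w \<Rightarrow> real. e (True, a, w) = e (True, a', w)})"
  define Z3 where "Z3 = (\<Union>(S,v0,z,y)\<in>{(S::'w set,v0,z::'a,y). v0 \<in> S \<and> z \<noteq> y}.
       {e :: bool \<times> 'a \<times> 'w \<Rightarrow> real. e (False, z, v0) = F3 \<mu> S v0 z y e})"
  have n1: "Z1 \<in> null_sets PM" unfolding Z1_def
    by (intro null_sets_UN') (auto intro: null_F1[of "(_,_)", simplified] countable_finite)
  have n2: "Z2 \<in> null_sets PM" unfolding Z2_def
    by (intro null_sets_UN') (auto intro: null_G1 countable_finite)
  have n3: "Z3 \<in> null_sets PM" unfolding Z3_def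
    by (intro null_sets_UN') (auto intro: null_F3 countable_finite)
  define Z where "Z = Z1 \<union> Z2 \<union> Z3"
  have nZ: "Z \<in> null_sets PM" unfolding Z_def using n1 n2 n3 by (intro null_sets.Un) auto
  define C where "C = {e :: bool \<times> 'a \<times> 'w \<Rightarrow> real. \<forall>i. e i \<in> {0..1}}"
  have Ceq: "C = PiE UNIV (\<lambda>_. {0..1})" unfolding C_def by auto
  have Cs: "C \<in> sets PM" unfolding Ceq by (intro sets_PiM_I_finite) auto
  interpret product_sigma_finite "\<lambda>_::bool \<times> 'a \<times> 'w. lborel" by standard
  have Cm: "emeasure PM C = 1" unfolding Ceq
    by (subst emeasure_PiM) auto
  define E where "E = C - Z"
  have Es: "E \<in> sets PM" unfolding E_def using Cs nZ by auto
  have Em: "emeasure PM E = 1" unfolding E_def using emeasure_Diff_null_set[OF nZ Cs] Cm by simp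
  have gen: "gen \<mu> e" if eE: "e \<in> E" for e
  proof -
    have eZ: "e \<notin> Z1" "e \<notin> Z2" "e \<notin> Z3" using eE by (auto simp: E_def Z_def)
    have g1: "env_S e a w \<noteq> env_S e a' w" if "a \<noteq> a'" for w a a'
      using eZ(2) that unfolding Z2_def env_S_def by auto
    have g2: "(\<Sum>v\<in>S. \<mu> v * (env_R e z v - env_R e y v)) \<noteq> 0" if ne: "S \<noteq> {}" and zy: "z \<noteq> y" for S z y
    proof
      assume s0: "(\<Sum>v\<in>S. \<mu> v * (env_R e z v - env_R e y v)) = 0"
      obtain v0 where v0: "v0 \<in> S" using ne by auto
      have "(\<Sum>v\<in>S. \<mu> v * (env_R e z v - env_R e y v)) =
          \<mu> v0 * (e (False, z, v0) - e (False, y, v0)) + (\<Sum>v\<in>S - {v0}. \<mu> v * (e (False, z, v) - e (False, y, v)))"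
        using v0 by (simp add: sum.remove env_R_def)
      then have "e (False, z, v0) = F3 \<mu> S v0 z y e"
        using s0 mpos[rule_format, of v0] unfolding F3_def by (simp add: field_simps)
      then show False using eZ(3) v0 zy unfolding Z3_def by auto
    qed
    have g3: "p1 = p2" if p: "p1 \<in> optset \<mu> (env_S e) (env_R e)" "p2 \<in> optset \<mu> (env_S e) (env_R e)" for p1 p2
    proof (rule ccontr)
      assume "p1 \<noteq> p2"
      from two_opt[OF p this] obtain A1 A2 k where
        k: "solv \<mu> (env_R e) A1 $ k \<noteq> solv \<mu> (env_R e) A2 $ k"
        and c: "cvec \<mu> (env_S e) \<bullet> solv \<mu> (env_R e) A1 = cvec \<mu> (env_S e) \<bullet> solv \<mu> (env_R e) A2"
        by blast
      define s1 where "s1 = solv \<mu> (env_R e) A1"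
      define s2 where "s2 = solv \<mu> (env_R e) A2"
      have "(\<Sum>j\<in>UNIV. \<mu> (snd j) * e (True, fst j, snd j) * (s1 $ j - s2 $ j)) = 0"
        using c unfolding cvec_inner s1_def[symmetric] s2_def[symmetric]
        by (simp add: algebra_simps sum_subtractf env_S_def)
      then have "\<mu> (snd k) * e (True, fst k, snd k) * (s1 $ k - s2 $ k)
         + (\<Sum>j\<in>UNIV - {k}. \<mu> (snd j) * e (True, fst j, snd j) * (s1 $ j - s2 $ j)) = 0"
        by (simp add: sum.remove)
      moreover have "\<mu> (snd k) * (s1 $ k - s2 $ k) \<noteq> 0"
        using k mpos[rule_format, of "snd k"] unfolding s1_def s2_def by auto
      ultimately have "e (True, fst k, snd k) = F1 \<mu> A1 A2 k e"
        unfolding F1_def s1_def[symmetric] s2_def[symmetric]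
        by (simp add: field_simps)
      then show False using eZ(1) unfolding Z1_def by (cases k) auto
    qed
    show ?thesis unfolding gen_def using g1 g2 g3 by blast
  qed
  have "E \<subseteq> {e. \<forall>i. e i \<in> {0..1}}" unfolding E_def C_def by auto
  then show ?thesis using Es Em gen by blast
qed

definition sig_of :: "real^(('w::finite \<times> 'm::finite) + ('m \<times> 'a::finite)) \<Rightarrow> 'w \<Rightarrow> 'm \<Rightarrow> real" where
  "sig_of v = (\<lambda>w m. v $ Inl (w, m))"
definition rho_of :: "real^(('w::finite \<times> 'm::finite) + ('m \<times> 'a::finite)) \<Rightarrow> 'm \<Rightarrow> 'a \<Rightarrow> real" where
  "rho_of v = (\<lambda>m a. v $ Inr (m, a))"
definition enc :: "('w::finite \<Rightarrow> 'm::finite \<Rightarrow> real) \<Rightarrow> ('m \<Rightarrow> 'a::finite \<Rightarrow> real) \<Rightarrow> real^(('w \<times> 'm) + ('m \<times> 'a))" where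
  "enc \<sigma> \<rho> = (\<chi> i. case i of Inl wm \<Rightarrow> \<sigma> (fst wm) (snd wm) | Inr ma \<Rightarrow> \<rho> (fst ma) (snd ma))"

lemma sig_enc[simp]: "sig_of (enc \<sigma> \<rho>) = \<sigma>" and rho_enc[simp]: "rho_of (enc \<sigma> \<rho>) = \<rho>"
  by (simp_all add: sig_of_def rho_of_def enc_def)

lemma msg_le1: "messaging_strategy \<sigma> \<Longrightarrow> \<sigma> w m \<le> 1"
proof -
  assume a: "messaging_strategy \<sigma>"
  have "\<sigma> w m \<le> (\<Sum>m\<in>UNIV. \<sigma> w m)" by (rule member_le_sum) (use a in \<open>auto simp: messaging_strategy_def\<close>)
  then show ?thesis using a by (simp add: messaging_strategy_def)
qed

lemma act_le1: "action_strategy \<rho> \<Longrightarrow> \<rho> m a \<le> 1"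
proof -
  assume a: "action_strategy \<rho>"
  have "\<rho> m a \<le> (\<Sum>a\<in>UNIV. \<rho> m a)" by (rule member_le_sum) (use a in \<open>auto simp: action_strategy_def\<close>)
  then show ?thesis using a by (simp add: action_strategy_def)
qed

lemma cont_payoff: "continuous_on UNIV (\<lambda>v. payoff \<mu> u (sig_of v) (rho_of v))"
  unfolding payoff_def sig_of_def rho_of_def
  by (intro continuous_intros)

lemma attain:
  fixes Q :: "('w::finite \<Rightarrow> 'm::finite \<Rightarrow> real) \<Rightarrow> ('m \<Rightarrow> 'a::finite \<Rightarrow> real) \<Rightarrow> bool"
  assumes cl: "closed {v. Q (sig_of v) (rho_of v)}" and ne: "Q \<sigma>0 \<rho>0"
    and pr: "\<And>\<sigma> \<rho>. Q \<sigma> \<rho> \<Longrightarrow> profile \<sigma> \<rho>"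
  shows "\<exists>\<sigma> \<rho>. Q \<sigma> \<rho> \<and> (\<forall>\<sigma>' \<rho>'. Q \<sigma>' \<rho>' \<longrightarrow> payoff \<mu> u \<sigma>' \<rho>' \<le> payoff \<mu> u \<sigma> \<rho>)"
proof -
  let ?K = "{v. Q (sig_of v) (rho_of v)}"
  have "?K \<subseteq> cbox 0 1"
  proof
    fix v assume "v \<in> ?K"
    then have p: "profile (sig_of v) (rho_of v)" using pr by auto
    show "v \<in> cbox 0 1" unfolding mem_box_cart
    proof (intro allI)
      fix i :: "('w \<times> 'm) + ('m \<times> 'a)"
      show "0 $ i \<le> v $ i \<and> v $ i \<le> 1 $ i"
      proof (cases i)
        case (Inl wm)
        then show ?thesis using p msg_le1[of "sig_of v" "fst wm" "snd wm"]
          by (cases wm) (auto simp: profile_def messaging_strategy_def sig_of_def)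
      next
        case (Inr ma)
        then show ?thesis using p act_le1[of "rho_of v" "fst ma" "snd ma"]
          by (cases ma) (auto simp: profile_def action_strategy_def rho_of_def)
      qed
    qed
  qed
  then have "bounded ?K" using bounded_cbox bounded_subset by blast
  then have cK: "compact ?K" using cl by (simp add: compact_eq_bounded_closed)
  let ?f = "\<lambda>v. payoff \<mu> u (sig_of v) (rho_of v)"
  have "compact (?f ` ?K)"
    by (rule compact_continuous_image[OF continuous_on_subset[OF cont_payoff] cK]) auto
  moreover have "enc \<sigma>0 \<rho>0 \<in> ?K" using ne by simp
  then have "?f ` ?K \<noteq> {}" by blast
  ultimately obtain s where s: "s \<in> ?f ` ?K" "\<forall>t\<in>?f ` ?K. t \<le> s"
    using compact_attains_sup by blast
  then obtain v where v: "Q (sig_of v) (rho_of v)" "s = ?f v" by auto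
  show ?thesis
  proof (intro exI conjI allI impI)
    show "Q (sig_of v) (rho_of v)" by (rule v)
    fix \<sigma>' \<rho>' assume "Q \<sigma>' \<rho>'"
    then have "enc \<sigma>' \<rho>' \<in> ?K" by simp
    then have "?f (enc \<sigma>' \<rho>') \<le> s" using s(2) by blast
    then show "payoff \<mu> u \<sigma>' \<rho>' \<le> payoff \<mu> u (sig_of v) (rho_of v)"
      using v(2) by simp
  qed
qed

lemma closed_profile: "closed {v. profile (sig_of v) (rho_of v)}"
  unfolding profile_def messaging_strategy_def action_strategy_def sig_of_def rho_of_def
  by (intro closed_Collect_conj closed_Collect_all closed_Collect_le closed_Collect_eq continuous_intros)

lemma closed_SBR: "closed {v. S_BR \<mu> u (sig_of v) (rho_of v)}"
  unfolding S_BR_def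
proof (intro closed_Collect_all)
  fix \<sigma>'
  show "closed {v. messaging_strategy \<sigma>' \<longrightarrow> payoff \<mu> u \<sigma>' (rho_of v) \<le> payoff \<mu> u (sig_of v) (rho_of v)}"
  proof (cases "messaging_strategy \<sigma>'")
    case True
    then show ?thesis unfolding payoff_def sig_of_def rho_of_def
      by simp (intro closed_Collect_le continuous_intros)
  qed simp
qed

lemma closed_RBR: "closed {v. R_BR \<mu> u (sig_of v) (rho_of v)}"
  unfolding R_BR_def
proof (intro closed_Collect_all)
  fix \<rho>'
  show "closed {v. action_strategy \<rho>' \<longrightarrow> payoff \<mu> u (sig_of v) \<rho>' \<le> payoff \<mu> u (sig_of v) (rho_of v)}"
  proof (cases "action_strategy \<rho>'")
    case True
    then show ?thesis unfolding payoff_def sig_of_def rho_of_def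
      by simp (intro closed_Collect_le continuous_intros)
  qed simp
qed

lemma partitional_iff:
  assumes "messaging_strategy \<sigma>"
  shows "partitional \<sigma> \<longleftrightarrow> (\<forall>w m. \<sigma> w m = 0 \<or> \<sigma> w m = 1)"
proof
  assume p: "partitional \<sigma>"
  show "\<forall>w m. \<sigma> w m = 0 \<or> \<sigma> w m = 1"
  proof (intro allI)
    fix w m
    obtain m0 where m0: "\<sigma> w m0 = 1" using p by (auto simp: partitional_def)
    have "(\<Sum>m\<in>UNIV. \<sigma> w m) = \<sigma> w m0 + (\<Sum>m\<in>UNIV - {m0}. \<sigma> w m)"
      by (simp add: sum.remove)
    then have "(\<Sum>m\<in>UNIV - {m0}. \<sigma> w m) = 0" using assms m0 by (simp add: messaging_strategy_def)
    then have "\<forall>m\<in>UNIV - {m0}. \<sigma> w m = 0"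
      using assms by (subst (asm) sum_nonneg_eq_0_iff) (auto simp: messaging_strategy_def)
    then show "\<sigma> w m = 0 \<or> \<sigma> w m = 1" using m0 by (cases "m = m0") auto
  qed
next
  assume H: "\<forall>w m. \<sigma> w m = 0 \<or> \<sigma> w m = 1"
  show "partitional \<sigma>" unfolding partitional_def
  proof
    fix w
    show "\<exists>m. \<sigma> w m = 1"
    proof (rule ccontr)
      assume "\<not> ?thesis"
      then have "\<forall>m. \<sigma> w m = 0" using H by blast
      then have "(\<Sum>m\<in>UNIV. \<sigma> w m) = 0" by simp
      with assms show False by (simp add: messaging_strategy_def)
    qed
  qed
qed

lemma closed_part: "closed {v. profile (sig_of v) (rho_of v) \<and> R_BR \<mu> u (sig_of v) (rho_of v) \<and> partitional (sig_of v)}"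
proof -
  have eq: "{v. profile (sig_of v) (rho_of v) \<and> R_BR \<mu> u (sig_of v) (rho_of v) \<and> partitional (sig_of v)}
     = {v. profile (sig_of v) (rho_of v)} \<inter> {v. R_BR \<mu> u (sig_of v) (rho_of v)} \<inter> {v. \<forall>w m. v $ Inl (w,m) = 0 \<or> v $ Inl (w,m) = 1}"
  proof (intro set_eqI iffI)
    fix v assume "v \<in> {v. profile (sig_of v) (rho_of v) \<and> R_BR \<mu> u (sig_of v) (rho_of v) \<and> partitional (sig_of v)}"
    then have a: "profile (sig_of v) (rho_of v)" "R_BR \<mu> u (sig_of v) (rho_of v)" "partitional (sig_of v)" by auto
    then have "messaging_strategy (sig_of v)" by (simp add: profile_def)
    from a(3)[unfolded partitional_iff[OF this]] a(1,2)
    show "v \<in> {v. profile (sig_of v) (rho_of v)} \<inter> {v. R_BR \<mu> u (sig_of v) (rho_of v)} \<inter> {v. \<forall>w m. v $ Inl (w,m) = 0 \<or> v $ Inl (w,m) = 1}"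
      by (simp add: sig_of_def)
  next
    fix v assume "v \<in> {v. profile (sig_of v) (rho_of v)} \<inter> {v. R_BR \<mu> u (sig_of v) (rho_of v)} \<inter> {v. \<forall>w m. v $ Inl (w,m) = 0 \<or> v $ Inl (w,m) = 1}"
    then have a: "profile (sig_of v) (rho_of v)" "R_BR \<mu> u (sig_of v) (rho_of v)" "\<forall>w m. sig_of v w m = 0 \<or> sig_of v w m = 1"
      by (auto simp: sig_of_def)
    then have "messaging_strategy (sig_of v)" by (simp add: profile_def)
    with a show "v \<in> {v. profile (sig_of v) (rho_of v) \<and> R_BR \<mu> u (sig_of v) (rho_of v) \<and> partitional (sig_of v)}"
      by (simp add: partitional_iff)
  qed
  have "closed {v :: real^(('a \<times> 'b) + ('b \<times> 'c)). \<forall>w m. v $ Inl (w,m) = 0 \<or> v $ Inl (w,m) = 1}"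
    by (intro closed_Collect_all closed_Collect_disj closed_Collect_eq continuous_intros)
  then show ?thesis unfolding eq by (intro closed_Int closed_profile closed_RBR)
qed

lemma closed_ct: "closed {v. profile (sig_of v) (rho_of v) \<and> S_BR \<mu> uS (sig_of v) (rho_of v) \<and> R_BR \<mu> uR (sig_of v) (rho_of v)}"
proof -
  have eq: "{v. profile (sig_of v) (rho_of v) \<and> S_BR \<mu> uS (sig_of v) (rho_of v) \<and> R_BR \<mu> uR (sig_of v) (rho_of v)}
     = {v. profile (sig_of v) (rho_of v)} \<inter> {v. S_BR \<mu> uS (sig_of v) (rho_of v)} \<inter> {v. R_BR \<mu> uR (sig_of v) (rho_of v)}"
    by auto
  show ?thesis unfolding eq by (intro closed_Int closed_profile closed_RBR closed_SBR)
qed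

lemma sum_UNIV_prod: "(\<Sum>k\<in>(UNIV::('a::finite \<times> 'b::finite) set). f k) = (\<Sum>a\<in>UNIV. \<Sum>b\<in>UNIV. f (a,b))"
  by (simp add: sum.cartesian_product UNIV_Times_UNIV[symmetric] case_prod_unfold del: UNIV_Times_UNIV)

definition ind :: "('w::finite \<Rightarrow> 'm::finite \<Rightarrow> real) \<Rightarrow> ('m \<Rightarrow> 'a::finite \<Rightarrow> real) \<Rightarrow> real^('a \<times> 'w)" where
  "ind \<sigma> \<rho> = (\<chi> k. \<Sum>m\<in>UNIV. \<sigma> (snd k) m * \<rho> m (fst k))"

definition gR where "gR \<mu> uR \<sigma> m x = (\<Sum>w\<in>UNIV. \<mu> w * \<sigma> w m * uR x w)"
definition hS where "hS uS \<rho> w m = (\<Sum>x\<in>UNIV. \<rho> m x * uS x w)"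

lemma pay_g: "payoff \<mu> u \<sigma> \<rho> = (\<Sum>m\<in>UNIV. \<Sum>x\<in>UNIV. \<rho> m x * gR \<mu> u \<sigma> m x)"
proof -
  have "payoff \<mu> u \<sigma> \<rho> = (\<Sum>m\<in>UNIV. \<Sum>w\<in>UNIV. \<Sum>a\<in>UNIV. \<mu> w * \<sigma> w m * \<rho> m a * u a w)"
    unfolding payoff_def by (rule sum.swap)
  also have "\<dots> = (\<Sum>m\<in>UNIV. \<Sum>a\<in>UNIV. \<Sum>w\<in>UNIV. \<mu> w * \<sigma> w m * \<rho> m a * u a w)"
    by (rule sum.cong[OF refl], rule sum.swap)
  also have "\<dots> = (\<Sum>m\<in>UNIV. \<Sum>x\<in>UNIV. \<rho> m x * gR \<mu> u \<sigma> m x)"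
    by (simp add: gR_def sum_distrib_left mult_ac)
  finally show ?thesis .
qed

lemma pay_h: "payoff \<mu> u \<sigma> \<rho> = (\<Sum>w\<in>UNIV. \<mu> w * (\<Sum>m\<in>UNIV. \<sigma> w m * hS u \<rho> w m))"
  unfolding payoff_def hS_def
  by (simp add: sum_distrib_left mult_ac)

lemma pay_ind: "payoff \<mu> u \<sigma> \<rho> = cvec \<mu> u \<bullet> ind \<sigma> \<rho>"
proof -
  have "payoff \<mu> u \<sigma> \<rho> = (\<Sum>w\<in>UNIV. \<Sum>a\<in>UNIV. \<Sum>m\<in>UNIV. \<mu> w * \<sigma> w m * \<rho> m a * u a w)"
    unfolding payoff_def by (rule sum.cong[OF refl], rule sum.swap)
  also have "\<dots> = (\<Sum>a\<in>UNIV. \<Sum>w\<in>UNIV. \<Sum>m\<in>UNIV. \<mu> w * \<sigma> w m * \<rho> m a * u a w)"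
    by (rule sum.swap)
  also have "\<dots> = cvec \<mu> u \<bullet> ind \<sigma> \<rho>"
    unfolding cvec_inner ind_def sum_UNIV_prod by (simp add: sum_distrib_left mult_ac)
  finally show ?thesis .
qed

lemma sum_delta2: "(\<Sum>z\<in>(UNIV::'a::finite set). ((if z = y then 1 else 0) - (if z = x then 1 else 0)) * f z) = f y - (f x :: real)"
proof -
  have "(\<Sum>z\<in>(UNIV::'a::finite set). ((if z = y then 1 else 0) - (if z = x then 1 else 0)) * f z) = 
    (\<Sum>z\<in>UNIV. (if z = y then f z else 0) - (if z = x then f z else 0))"
    by (rule sum.cong) auto
  also have "\<dots> = f y - f x" by (simp add: sum_subtractf)
  finally show ?thesis .
qed

lemma sum_delta2': "(\<Sum>z\<in>(UNIV::'a::finite set). ((if z = y then 1 else 0) - (if z = x then 1 else 0))) = (0::real)"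
  using sum_delta2[of y x "\<lambda>_. 1"] by simp

lemma sum_if_eq: "(\<Sum>m'\<in>(UNIV::'a::finite set). \<Sum>z\<in>(UNIV::'b::finite set). (if m' = m then F z else (0::real))) = (\<Sum>z\<in>UNIV. F z)"
  by (subst sum.swap) simp

lemma RBR_nec:
  assumes a: "action_strategy \<rho>" and r: "R_BR \<mu> uR \<sigma> \<rho>" and pos: "\<rho> m x > 0"
  shows "gR \<mu> uR \<sigma> m y \<le> gR \<mu> uR \<sigma> m x"
proof (cases "x = y")
  case False
  define \<rho>' where "\<rho>' = (\<lambda>m' z. \<rho> m' z + (if m' = m then \<rho> m x * ((if z = y then 1 else 0) - (if z = x then 1 else 0)) else 0))"
  have "action_strategy \<rho>'"
    unfolding action_strategy_def
  proof (intro conjI allI)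
    fix m' z show "0 \<le> \<rho>' m' z"
      using a pos False unfolding \<rho>'_def action_strategy_def by (auto simp: algebra_simps)
  next
    fix m' show "(\<Sum>z\<in>UNIV. \<rho>' m' z) = 1"
      using a unfolding \<rho>'_def action_strategy_def
      by (cases "m' = m") (simp_all add: sum.distrib sum_distrib_left[symmetric] sum_delta2')
  qed
  then have le: "payoff \<mu> uR \<sigma> \<rho>' \<le> payoff \<mu> uR \<sigma> \<rho>" using r by (simp add: R_BR_def)
  have "payoff \<mu> uR \<sigma> \<rho>' = payoff \<mu> uR \<sigma> \<rho> + (\<Sum>m'\<in>UNIV. \<Sum>z\<in>UNIV. (if m' = m then \<rho> m x * ((if z = y then 1 else 0) - (if z = x then 1 else 0)) else 0) * gR \<mu> uR \<sigma> m' z)"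
    unfolding pay_g \<rho>'_def by (simp add: distrib_right sum.distrib)
  also have "\<dots> = payoff \<mu> uR \<sigma> \<rho> + \<rho> m x * (gR \<mu> uR \<sigma> m y - gR \<mu> uR \<sigma> m x)"
  proof -
    have "(\<Sum>m'\<in>UNIV. \<Sum>z\<in>UNIV. (if m' = m then \<rho> m x * ((if z = y then 1 else 0) - (if z = x then 1 else 0)) else 0) * gR \<mu> uR \<sigma> m' z)
      = (\<Sum>m'\<in>UNIV. \<Sum>z\<in>UNIV. (if m' = m then \<rho> m x * (((if z = y then 1 else 0) - (if z = x then 1 else 0)) * gR \<mu> uR \<sigma> m z) else 0))"
      by (intro sum.cong refl) auto
    also have "\<dots> = \<rho> m x * (gR \<mu> uR \<sigma> m y - gR \<mu> uR \<sigma> m x)"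
      by (simp only: sum_if_eq sum_distrib_left[symmetric] sum_delta2)
    finally show ?thesis by simp
  qed
  finally have "\<rho> m x * (gR \<mu> uR \<sigma> m y - gR \<mu> uR \<sigma> m x) \<le> 0" using le by simp
  then show ?thesis using pos by (simp add: mult_le_0_iff)
qed simp

lemma RBR_suff:
  fixes \<sigma> :: "'w::finite \<Rightarrow> 'm::finite \<Rightarrow> real" and \<rho> :: "'m \<Rightarrow> 'a::finite \<Rightarrow> real"
  assumes a: "action_strategy \<rho>"
    and opt: "\<And>m x y. \<rho> m x > 0 \<Longrightarrow> gR \<mu> uR \<sigma> m y \<le> gR \<mu> uR \<sigma> m x"
  shows "R_BR \<mu> uR \<sigma> \<rho>"
  unfolding R_BR_def
proof (intro allI impI)
  fix \<rho>' :: "'m \<Rightarrow> 'a \<Rightarrow> real" assume a': "action_strategy \<rho>'"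
  define G where "G m = Max (range (gR \<mu> uR \<sigma> m))" for m
  have gle: "gR \<mu> uR \<sigma> m z \<le> G m" for m z unfolding G_def by (rule Max_ge) auto
  have geq: "\<rho> m z * gR \<mu> uR \<sigma> m z = \<rho> m z * G m" for m z
  proof (cases "\<rho> m z > 0")
    case True
    have "G m \<in> range (gR \<mu> uR \<sigma> m)" unfolding G_def by (rule Max_in) auto
    then obtain y where "G m = gR \<mu> uR \<sigma> m y" by auto
    then have "gR \<mu> uR \<sigma> m z = G m" using opt[OF True, of y] gle[of m z] by simp
    then show ?thesis by simp
  next
    case False
    moreover have "0 \<le> \<rho> m z" using a by (simp add: action_strategy_def)
    ultimately have "\<rho> m z = 0" by simp
    then show ?thesis by simp
  qed
  have "payoff \<mu> uR \<sigma> \<rho>' \<le> (\<Sum>m\<in>UNIV. \<Sum>x\<in>UNIV. \<rho>' m x * G m)"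
    unfolding pay_g using a' by (intro sum_mono mult_left_mono gle) (auto simp: action_strategy_def)
  also have "\<dots> = (\<Sum>m\<in>UNIV. G m)" using a' by (simp add: sum_distrib_right[symmetric] action_strategy_def)
  also have "\<dots> = (\<Sum>m\<in>UNIV. \<Sum>x\<in>UNIV. \<rho> m x * G m)" using a by (simp add: sum_distrib_right[symmetric] action_strategy_def)
  also have "\<dots> = payoff \<mu> uR \<sigma> \<rho>" unfolding pay_g by (simp add: geq)
  finally show "payoff \<mu> uR \<sigma> \<rho>' \<le> payoff \<mu> uR \<sigma> \<rho>" .
qed

lemma SBR_nec:
  assumes a: "messaging_strategy \<sigma>" and s: "S_BR \<mu> uS \<sigma> \<rho>" and pos: "\<sigma> w m > 0" and mu: "\<mu> w > 0"
  shows "hS uS \<rho> w m' \<le> hS uS \<rho> w m"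
proof (cases "m = m'")
  case False
  define \<sigma>' where "\<sigma>' = (\<lambda>w' k. \<sigma> w' k + (if w' = w then \<sigma> w m * ((if k = m' then 1 else 0) - (if k = m then 1 else 0)) else 0))"
  have "messaging_strategy \<sigma>'"
    unfolding messaging_strategy_def
  proof (intro conjI allI)
    fix w' k show "0 \<le> \<sigma>' w' k"
      using a pos False unfolding \<sigma>'_def messaging_strategy_def by (auto simp: algebra_simps)
  next
    fix w' show "(\<Sum>k\<in>UNIV. \<sigma>' w' k) = 1"
      using a unfolding \<sigma>'_def messaging_strategy_def
      by (cases "w' = w") (simp_all add: sum.distrib sum_distrib_left[symmetric] sum_delta2')
  qed
  then have le: "payoff \<mu> uS \<sigma>' \<rho> \<le> payoff \<mu> uS \<sigma> \<rho>" using s by (simp add: S_BR_def)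
  have "payoff \<mu> uS \<sigma>' \<rho> = payoff \<mu> uS \<sigma> \<rho> + (\<Sum>w'\<in>UNIV. \<mu> w' * (\<Sum>k\<in>UNIV. (if w' = w then \<sigma> w m * ((if k = m' then 1 else 0) - (if k = m then 1 else 0)) else 0) * hS uS \<rho> w' k))"
    unfolding pay_h \<sigma>'_def by (simp add: distrib_right distrib_left sum.distrib)
  also have "\<dots> = payoff \<mu> uS \<sigma> \<rho> + \<mu> w * (\<sigma> w m * (hS uS \<rho> w m' - hS uS \<rho> w m))"
  proof -
    have "(\<Sum>w'\<in>UNIV. \<mu> w' * (\<Sum>k\<in>UNIV. (if w' = w then \<sigma> w m * ((if k = m' then 1 else 0) - (if k = m then 1 else 0)) else 0) * hS uS \<rho> w' k))
      = (\<Sum>w'\<in>UNIV. \<Sum>k\<in>UNIV. (if w' = w then \<mu> w * (\<sigma> w m * (((if k = m' then 1 else 0) - (if k = m then 1 else 0)) * hS uS \<rho> w k)) else 0))"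
      by (rule sum.cong[OF refl], subst sum_distrib_left, rule sum.cong[OF refl], auto)
    also have "\<dots> = \<mu> w * (\<sigma> w m * (hS uS \<rho> w m' - hS uS \<rho> w m))"
      by (simp only: sum_if_eq sum_distrib_left[symmetric] sum_delta2)
    finally show ?thesis by simp
  qed
  finally have "\<mu> w * (\<sigma> w m * (hS uS \<rho> w m' - hS uS \<rho> w m)) \<le> 0" using le by simp
  then show ?thesis using pos mu by (simp add: mult_le_0_iff)
qed simp

lemma SBR_suff:
  fixes \<sigma> :: "'w::finite \<Rightarrow> 'm::finite \<Rightarrow> real" and \<rho> :: "'m \<Rightarrow> 'a::finite \<Rightarrow> real"
  assumes a: "messaging_strategy \<sigma>" and mu: "\<And>w. \<mu> w \<ge> 0"
    and opt: "\<And>w m m'. \<sigma> w m > 0 \<Longrightarrow> hS uS \<rho> w m' \<le> hS uS \<rho> w m"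
  shows "S_BR \<mu> uS \<sigma> \<rho>"
  unfolding S_BR_def
proof (intro allI impI)
  fix \<sigma>' :: "'w \<Rightarrow> 'm \<Rightarrow> real" assume a': "messaging_strategy \<sigma>'"
  define H where "H w = Max (range (hS uS \<rho> w))" for w
  have hle: "hS uS \<rho> w k \<le> H w" for w k unfolding H_def by (rule Max_ge) auto
  have heq: "\<sigma> w k * hS uS \<rho> w k = \<sigma> w k * H w" for w k
  proof (cases "\<sigma> w k > 0")
    case True
    have "H w \<in> range (hS uS \<rho> w)" unfolding H_def by (rule Max_in) auto
    then obtain y where "H w = hS uS \<rho> w y" by auto
    then have "hS uS \<rho> w k = H w" using opt[OF True, of y] hle[of w k] by simp
    then show ?thesis by simp
  next
    case False
    moreover have "0 \<le> \<sigma> w k" using a by (simp add: messaging_strategy_def)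
    ultimately have "\<sigma> w k = 0" by simp
    then show ?thesis by simp
  qed
  have "payoff \<mu> uS \<sigma>' \<rho> \<le> (\<Sum>w\<in>UNIV. \<mu> w * (\<Sum>k\<in>UNIV. \<sigma>' w k * H w))"
    unfolding pay_h using a' mu by (intro sum_mono mult_left_mono hle) (auto simp: messaging_strategy_def)
  also have "\<dots> = (\<Sum>w\<in>UNIV. \<mu> w * H w)" using a' by (simp add: sum_distrib_right[symmetric] messaging_strategy_def)
  also have "\<dots> = (\<Sum>w\<in>UNIV. \<mu> w * (\<Sum>k\<in>UNIV. \<sigma> w k * H w))" using a by (simp add: sum_distrib_right[symmetric] messaging_strategy_def)
  also have "\<dots> = payoff \<mu> uS \<sigma> \<rho>" unfolding pay_h by (simp add: heq)
  finally show "payoff \<mu> uS \<sigma>' \<rho> \<le> payoff \<mu> uS \<sigma> \<rho>" .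
qed

lemma sum_snd: "(\<Sum>k\<in>{k. snd k = w}. f k) = (\<Sum>a\<in>(UNIV::'a::finite set). f (a, w :: 'w::finite))"
proof -
  have "{k. snd k = w} = (\<lambda>a. (a, w)) ` (UNIV::'a set)" by auto
  moreover have "inj_on (\<lambda>a::'a. (a, w)) UNIV" by (auto simp: inj_on_def)
  ultimately show ?thesis by (simp add: sum.reindex)
qed

lemma ind_comp: "ind \<sigma> \<rho> $ (x, w) = (\<Sum>m\<in>UNIV. \<sigma> w m * \<rho> m x)"
  by (simp add: ind_def)

lemma ind_Pset:
  fixes \<sigma> :: "'w::finite \<Rightarrow> 'm::finite \<Rightarrow> real" and \<rho> :: "'m \<Rightarrow> 'a::finite \<Rightarrow> real"
  assumes pr: "profile \<sigma> \<rho>"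
    and opt: "\<And>m x y. \<rho> m x > 0 \<Longrightarrow> gR \<mu> uR \<sigma> m y \<le> gR \<mu> uR \<sigma> m x"
  shows "ind \<sigma> \<rho> \<in> Pset \<mu> uR"
  unfolding Pset_iff
proof (intro conjI allI)
  have s: "messaging_strategy \<sigma>" and r: "action_strategy \<rho>" using pr by (auto simp: profile_def)
  fix j :: "'a \<times> 'w"
  show "0 \<le> ind \<sigma> \<rho> $ j" unfolding ind_def using s r
    by (auto intro!: sum_nonneg mult_nonneg_nonneg simp: messaging_strategy_def action_strategy_def)
next
  have s: "messaging_strategy \<sigma>" and r: "action_strategy \<rho>" using pr by (auto simp: profile_def)
  fix w
  have "(\<Sum>k\<in>{k. snd k = w}. ind \<sigma> \<rho> $ k) = (\<Sum>a\<in>UNIV. \<Sum>m\<in>UNIV. \<sigma> w m * \<rho> m a)"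
    by (simp add: sum_snd ind_comp)
  also have "\<dots> = (\<Sum>m\<in>UNIV. \<sigma> w m * (\<Sum>a\<in>UNIV. \<rho> m a))"
    by (subst sum.swap) (simp add: sum_distrib_left)
  also have "\<dots> = 1" using s r by (simp add: messaging_strategy_def action_strategy_def)
  finally show "(\<Sum>k\<in>{k. snd k = w}. ind \<sigma> \<rho> $ k) = 1" .
next
  have r: "action_strategy \<rho>" using pr by (auto simp: profile_def)
  fix x y
  have "(\<Sum>w\<in>UNIV. \<mu> w * (uR x w - uR y w) * ind \<sigma> \<rho> $ (x, w))
     = (\<Sum>w\<in>UNIV. \<Sum>m\<in>UNIV. \<rho> m x * (\<mu> w * \<sigma> w m * uR x w - \<mu> w * \<sigma> w m * uR y w))"
    by (simp add: ind_comp sum_distrib_left algebra_simps sum_subtractf)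
  also have "\<dots> = (\<Sum>m\<in>UNIV. \<rho> m x * (gR \<mu> uR \<sigma> m x - gR \<mu> uR \<sigma> m y))"
    by (subst sum.swap) (simp add: gR_def sum_distrib_left sum_subtractf[symmetric] right_diff_distrib)
  also have "\<dots> \<ge> 0"
  proof (intro sum_nonneg)
    fix m
    show "0 \<le> \<rho> m x * (gR \<mu> uR \<sigma> m x - gR \<mu> uR \<sigma> m y)"
    proof (cases "\<rho> m x > 0")
      case True then show ?thesis using opt[OF True, of y] by simp
    next
      case False
      moreover have "0 \<le> \<rho> m x" using r by (simp add: action_strategy_def)
      ultimately show ?thesis by simp
    qed
  qed
  finally show "0 \<le> (\<Sum>w\<in>UNIV. \<mu> w * (uR x w - uR y w) * ind \<sigma> \<rho> $ (x, w))" .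
qed

lemma RBR_opt: "profile \<sigma> \<rho> \<Longrightarrow> R_BR \<mu> uR \<sigma> \<rho> \<Longrightarrow> ind \<sigma> \<rho> \<in> Pset \<mu> uR"
  by (rule ind_Pset) (auto intro: RBR_nec simp: profile_def)

definition actf :: "('a \<Rightarrow> 'm) \<Rightarrow> 'a set \<Rightarrow> 'a \<Rightarrow> 'm \<Rightarrow> 'a" where
  "actf e Sa d m = (if m \<in> e ` Sa then inv e m else d)"
definition sigp :: "('a::finite \<Rightarrow> 'm::finite) \<Rightarrow> real^('a \<times> 'w::finite) \<Rightarrow> 'w \<Rightarrow> 'm \<Rightarrow> real" where
  "sigp e p w m = (\<Sum>a\<in>UNIV. if e a = m then p $ (a, w) else 0)"
definition rhop :: "('a \<Rightarrow> 'm) \<Rightarrow> 'a set \<Rightarrow> 'a \<Rightarrow> 'm \<Rightarrow> 'a \<Rightarrow> real" where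
  "rhop e Sa d m z = (if z = actf e Sa d m then 1 else 0)"

lemma sigp_e: "inj e \<Longrightarrow> sigp e p w (e a) = p $ (a, w)"
proof -
  assume "inj e"
  then have "(\<Sum>a'\<in>UNIV. if e a' = e a then p $ (a', w) else 0) = (\<Sum>a'\<in>UNIV. if a' = a then p $ (a', w) else 0)"
    by (intro sum.cong) (auto simp: inj_eq)
  then show ?thesis by (simp add: sigp_def)
qed

lemma actf_e: "inj e \<Longrightarrow> a \<in> Sa \<Longrightarrow> actf e Sa d (e a) = a"
  by (simp add: actf_def)

lemma actf_in: "inj e \<Longrightarrow> actf e Sa d m \<in> Sa \<union> {d}"
  by (auto simp: actf_def inv_f_f)

lemma sigp_out:
  assumes "inj e" "\<forall>a w. p $ (a, w) \<noteq> 0 \<longrightarrow> a \<in> Sa" "m \<notin> e ` Sa"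
  shows "sigp e p w m = 0"
  unfolding sigp_def using assms by (intro sum.neutral) auto

lemma rhop_strategy: "action_strategy (rhop e Sa d)"
  by (simp add: action_strategy_def rhop_def)

lemma sigp_strategy:
  assumes "p \<in> Pset \<mu> uR"
  shows "messaging_strategy (sigp e p)"
  unfolding messaging_strategy_def
proof (intro conjI allI)
  fix w m show "0 \<le> sigp e p w m" unfolding sigp_def using Pset_nonneg[OF assms] by (auto intro!: sum_nonneg)
next
  fix w
  have "(\<Sum>m\<in>UNIV. sigp e p w m) = (\<Sum>a\<in>UNIV. \<Sum>m\<in>UNIV. if e a = m then p $ (a, w) else 0)"
    unfolding sigp_def by (rule sum.swap)
  also have "\<dots> = (\<Sum>a\<in>UNIV. p $ (a, w))" by simp
  also have "\<dots> = 1" using Pset_sum[OF assms, of w] by (simp add: sum_snd)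
  finally show "(\<Sum>m\<in>UNIV. sigp e p w m) = 1" .
qed

lemma realize_RBR:
  assumes inj: "inj e" and P: "p \<in> Pset \<mu> uR" and supp: "\<forall>a w. p $ (a, w) \<noteq> 0 \<longrightarrow> a \<in> Sa"
  shows "R_BR \<mu> uR (sigp e p) (rhop e Sa d)"
proof (rule RBR_suff[OF rhop_strategy])
  fix m z y assume "rhop e Sa d m z > 0"
  then have z: "z = actf e Sa d m" by (simp add: rhop_def split: if_splits)
  show "gR \<mu> uR (sigp e p) m y \<le> gR \<mu> uR (sigp e p) m z"
  proof (cases "m \<in> e ` Sa")
    case True
    then obtain a where a: "a \<in> Sa" "m = e a" by auto
    then have za: "z = a" using z actf_e[OF inj] by simp
    have "0 \<le> (\<Sum>w\<in>UNIV. \<mu> w * (uR a w - uR y w) * p $ (a, w))" using P by (simp add: Pset_iff)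
    then show ?thesis unfolding gR_def a(2) za sigp_e[OF inj]
      by (simp add: algebra_simps sum_subtractf)
  next
    case False
    then show ?thesis unfolding gR_def using sigp_out[OF inj supp False] by simp
  qed
qed

lemma realize_ind:
  assumes inj: "inj e" and supp: "\<forall>a w. p $ (a, w) \<noteq> 0 \<longrightarrow> a \<in> Sa"
  shows "ind (sigp e p) (rhop e Sa d) = p"
proof -
  have "ind (sigp e p) (rhop e Sa d) $ (x, w) = p $ (x, w)" for x w
  proof -
    have "ind (sigp e p) (rhop e Sa d) $ (x, w) = (\<Sum>m\<in>UNIV. \<Sum>a\<in>UNIV. (if e a = m then p $ (a, w) * rhop e Sa d m x else 0))"
      unfolding ind_comp sigp_def by (simp add: sum_distrib_right if_distrib[of "\<lambda>t. t * _"] cong: if_cong)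
    also have "\<dots> = (\<Sum>a\<in>UNIV. p $ (a, w) * rhop e Sa d (e a) x)"
      by (subst sum.swap) simp
    also have "\<dots> = (\<Sum>a\<in>UNIV. if a = x then p $ (a, w) else 0)"
    proof (intro sum.cong refl)
      fix a
      show "p $ (a, w) * rhop e Sa d (e a) x = (if a = x then p $ (a, w) else 0)"
      proof (cases "p $ (a, w) = 0")
        case False
        then have "a \<in> Sa" using supp by auto
        then show ?thesis using actf_e[OF inj] by (auto simp: rhop_def)
      qed auto
    qed
    also have "\<dots> = p $ (x, w)" by simp
    finally show ?thesis .
  qed
  then show ?thesis by (simp add: vec_eq_iff)
qed

lemma realize_pay:
  assumes inj: "inj e" and supp: "\<forall>a w. p $ (a, w) \<noteq> 0 \<longrightarrow> a \<in> Sa"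
  shows "payoff \<mu> uS (sigp e p) (rhop e Sa d) = cvec \<mu> uS \<bullet> p"
  by (simp add: pay_ind realize_ind[OF assms])

lemma realize_profile: "p \<in> Pset \<mu> uR \<Longrightarrow> profile (sigp e p) (rhop e Sa d)"
  by (simp add: profile_def sigp_strategy rhop_strategy)

lemma term_bound:
  fixes s r m u :: real
  assumes "0 \<le> s" "s \<le> 1" "0 \<le> r" "r \<le> 1"
  shows "m * s * r * u \<le> \<bar>m * u\<bar>"
proof -
  have "m * s * r * u \<le> \<bar>m * s * r * u\<bar>" by simp
  also have "\<dots> = \<bar>m * u\<bar> * (s * r)" using assms by (simp add: abs_mult)
  also have "\<dots> \<le> \<bar>m * u\<bar>"
  proof -
    have "s * r \<le> 1" using assms by (intro mult_le_one)
    then show ?thesis by (simp add: mult_left_le)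
  qed
  finally show ?thesis .
qed

lemma pay_bound:
  fixes \<sigma> :: "'w::finite \<Rightarrow> 'm::finite \<Rightarrow> real"
  assumes "profile \<sigma> \<rho>"
  shows "payoff \<mu> u \<sigma> \<rho> \<le> (\<Sum>w\<in>UNIV. \<Sum>m\<in>(UNIV::'m::finite set). \<Sum>a\<in>UNIV. \<bar>\<mu> w * u a w\<bar>)"
  unfolding payoff_def
  by (intro sum_mono term_bound)
     (use assms msg_le1 act_le1 in \<open>auto simp: profile_def messaging_strategy_def action_strategy_def\<close>)

lemma bdd_pers: "bdd_above {payoff \<mu> uS \<sigma> \<rho> | (\<sigma> :: 'w::finite \<Rightarrow> 'm::finite \<Rightarrow> real) \<rho>. profile \<sigma> \<rho> \<and> R_BR \<mu> uR \<sigma> \<rho>}"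
proof (rule bdd_aboveI[where M = "\<Sum>w\<in>UNIV. \<Sum>m\<in>(UNIV::'m set). \<Sum>a\<in>UNIV. \<bar>\<mu> w * uS a w\<bar>"])
  fix x assume "x \<in> {payoff \<mu> uS \<sigma> \<rho> | (\<sigma> :: 'w::finite \<Rightarrow> 'm::finite \<Rightarrow> real) \<rho>. profile \<sigma> \<rho> \<and> R_BR \<mu> uR \<sigma> \<rho>}"
  then obtain \<sigma> :: "'w \<Rightarrow> 'm \<Rightarrow> real" and \<rho> where "x = payoff \<mu> uS \<sigma> \<rho>" "profile \<sigma> \<rho>" by auto
  then show "x \<le> (\<Sum>w\<in>UNIV. \<Sum>m\<in>(UNIV::'m set). \<Sum>a\<in>UNIV. \<bar>\<mu> w * uS a w\<bar>)"
    using pay_bound[of \<sigma> \<rho> \<mu> uS] by simp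
qed

lemma pers_upper:
  fixes \<sigma> :: "'w::finite \<Rightarrow> 'm::finite \<Rightarrow> real"
  assumes "profile \<sigma> \<rho>" "R_BR \<mu> uR \<sigma> \<rho>"
  shows "payoff \<mu> uS \<sigma> \<rho> \<le> persuasion_payoff TYPE('m) \<mu> uS uR"
  unfolding persuasion_payoff_def using assms by (intro cSup_upper bdd_pers) auto

lemma V_ge:
  fixes e :: "'a::finite \<Rightarrow> 'm::finite" and p :: "real^('a \<times> 'w::finite)"
  assumes inj: "inj e" and P: "p \<in> Pset \<mu> uR"
  shows "cvec \<mu> uS \<bullet> p \<le> persuasion_payoff TYPE('m) \<mu> uS uR"
proof -
  have "payoff \<mu> uS (sigp e p) (rhop e UNIV undefined) \<le> persuasion_payoff TYPE('m) \<mu> uS uR"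
    by (rule pers_upper[OF realize_profile[OF P] realize_RBR[OF inj P]]) auto
  then show ?thesis using realize_pay[OF inj, of p UNIV] by simp
qed

lemma opt_ind:
  fixes e :: "'a::finite \<Rightarrow> 'm::finite" and \<sigma> :: "'w::finite \<Rightarrow> 'm \<Rightarrow> real"
    and uR uS :: "'a \<Rightarrow> 'w \<Rightarrow> real"
  assumes inj: "inj e" and pr: "profile \<sigma> \<rho>" "R_BR \<mu> uR \<sigma> \<rho>"
    and eq: "payoff \<mu> uS \<sigma> \<rho> = persuasion_payoff TYPE('m) \<mu> uS uR"
  shows "ind \<sigma> \<rho> \<in> optset \<mu> uS uR"
  unfolding optset_def using RBR_opt[OF pr] V_ge[OF inj, of _ \<mu> uR uS] eq by (simp add: pay_ind)

lemma payoff_lin: "payoff \<mu> u \<sigma> (\<lambda>m z. a * r1 m z + b * r2 m z) = a * payoff \<mu> u \<sigma> r1 + b * payoff \<mu> u \<sigma> r2"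
  unfolding payoff_def by (simp add: sum.distrib sum_distrib_left algebra_simps)

lemma sum_upd_delta: "(\<Sum>m'\<in>(UNIV::'m::finite set). f m' * (g m' + (if m' = m then c else 0))) = (\<Sum>m'\<in>UNIV. f m' * g m') + f m * (c::real)"
proof -
  have "(\<Sum>m'\<in>(UNIV::'m set). f m' * (g m' + (if m' = m then c else 0))) = (\<Sum>m'\<in>UNIV. f m' * g m' + (if m' = m then f m * c else 0))"
    by (rule sum.cong) (auto simp: algebra_simps)
  then show ?thesis by (simp add: sum.distrib)
qed

lemma shift_strategy:
  assumes r: "action_strategy \<rho>" and xy: "x \<noteq> y" and pos: "\<rho> m x > 0"
  shows "action_strategy (\<lambda>m' z. \<rho> m' z + (if m' = m then \<rho> m x * ((if z = y then 1 else 0) - (if z = x then 1 else 0)) else 0))"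
  unfolding action_strategy_def
proof (intro conjI allI)
  fix m' z show "0 \<le> \<rho> m' z + (if m' = m then \<rho> m x * ((if z = y then 1 else 0) - (if z = x then 1 else 0)) else 0)"
    using r pos xy unfolding action_strategy_def by (auto simp: algebra_simps)
next
  fix m' show "(\<Sum>z\<in>UNIV. \<rho> m' z + (if m' = m then \<rho> m x * ((if z = y then 1 else 0) - (if z = x then 1 else 0)) else 0)) = 1"
    using r unfolding action_strategy_def
    by (cases "m' = m") (simp_all add: sum.distrib sum_distrib_left[symmetric] sum_delta2')
qed

lemma no_mix:
  fixes e :: "'a::finite \<Rightarrow> 'm::finite" and \<sigma> :: "'w::finite \<Rightarrow> 'm \<Rightarrow> real" and \<rho> :: "'m \<Rightarrow> 'a \<Rightarrow> real"
    and uR uS :: "'a \<Rightarrow> 'w \<Rightarrow> real"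
  assumes inj: "inj e" and unq: "\<forall>p1 p2. p1 \<in> optset \<mu> uS uR \<longrightarrow> p2 \<in> optset \<mu> uS uR \<longrightarrow> p1 = p2"
    and pr: "profile \<sigma> \<rho>" "R_BR \<mu> uR \<sigma> \<rho>"
    and eq: "payoff \<mu> uS \<sigma> \<rho> = persuasion_payoff TYPE('m) \<mu> uS uR"
    and sw: "\<sigma> w0 m > 0" and px: "\<rho> m x > 0" and py: "\<rho> m y > 0"
  shows "x = y"
proof (rule ccontr)
  assume xy: "x \<noteq> y"
  let ?V = "persuasion_payoff TYPE('m) \<mu> uS uR"
  have r: "action_strategy \<rho>" and s: "messaging_strategy \<sigma>" using pr by (auto simp: profile_def)
  define \<rho>1 where "\<rho>1 = (\<lambda>m' z. \<rho> m' z + (if m' = m then \<rho> m x * ((if z = y then 1 else 0) - (if z = x then 1 else 0)) else 0))"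
  define \<rho>2 where "\<rho>2 = (\<lambda>m' z. \<rho> m' z + (if m' = m then \<rho> m y * ((if z = x then 1 else 0) - (if z = y then 1 else 0)) else 0))"
  have a1: "action_strategy \<rho>1" unfolding \<rho>1_def by (rule shift_strategy[OF r xy px])
  have a2: "action_strategy \<rho>2" unfolding \<rho>2_def by (rule shift_strategy[OF r xy[symmetric] py])
  have pos1: "\<rho> m' z > 0" if "\<rho>1 m' z > 0" for m' z
    using that py px r unfolding \<rho>1_def action_strategy_def by (auto split: if_splits)
  have pos2: "\<rho> m' z > 0" if "\<rho>2 m' z > 0" for m' z
    using that py px r unfolding \<rho>2_def action_strategy_def by (auto split: if_splits)
  have R1: "R_BR \<mu> uR \<sigma> \<rho>1"
    by (rule RBR_suff[OF a1], rule RBR_nec[OF r pr(2)], erule pos1)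
  have R2: "R_BR \<mu> uR \<sigma> \<rho>2"
    by (rule RBR_suff[OF a2], rule RBR_nec[OF r pr(2)], erule pos2)
  have pr1: "profile \<sigma> \<rho>1" and pr2: "profile \<sigma> \<rho>2" using s a1 a2 by (auto simp: profile_def)
  have P1: "payoff \<mu> uS \<sigma> \<rho>1 \<le> ?V" by (rule pers_upper[OF pr1 R1])
  have P2: "payoff \<mu> uS \<sigma> \<rho>2 \<le> ?V" by (rule pers_upper[OF pr2 R2])
  define t where "t = \<rho> m x + \<rho> m y"
  have tpos: "t > 0" using px py by (simp add: t_def)
  define l where "l = \<rho> m y / t"
  have l0: "0 < l" and l1: "l < 1" using px py tpos by (auto simp: l_def t_def field_simps)
  have decomp: "\<rho> = (\<lambda>m' z. l * \<rho>1 m' z + (1 - l) * \<rho>2 m' z)"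
  proof (intro ext)
    fix m' z
    show "\<rho> m' z = l * \<rho>1 m' z + (1 - l) * \<rho>2 m' z"
    proof (cases "m' = m")
      case True
      have "l * (\<rho> m x * ((if z = y then 1 else 0) - (if z = x then 1 else 0))) + (1 - l) * (\<rho> m y * ((if z = x then 1 else 0) - (if z = y then 1 else 0))) = 0"
        using tpos xy unfolding l_def t_def by (auto simp: field_simps)
      then show ?thesis unfolding \<rho>1_def \<rho>2_def using True by (simp add: algebra_simps)
    next
      case False
      then show ?thesis unfolding \<rho>1_def \<rho>2_def by (simp add: algebra_simps)
    qed
  qed
  have "payoff \<mu> uS \<sigma> \<rho> = l * payoff \<mu> uS \<sigma> \<rho>1 + (1 - l) * payoff \<mu> uS \<sigma> \<rho>2"
    by (subst decomp) (rule payoff_lin)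
  then have "l * (?V - payoff \<mu> uS \<sigma> \<rho>1) + (1 - l) * (?V - payoff \<mu> uS \<sigma> \<rho>2) = 0"
    using eq by (simp add: algebra_simps)
  moreover have "0 \<le> l * (?V - payoff \<mu> uS \<sigma> \<rho>1)" "0 \<le> (1 - l) * (?V - payoff \<mu> uS \<sigma> \<rho>2)"
    using l0 l1 P1 P2 by auto
  ultimately have "l * (?V - payoff \<mu> uS \<sigma> \<rho>1) = 0" "(1 - l) * (?V - payoff \<mu> uS \<sigma> \<rho>2) = 0"
    by linarith+
  then have E1: "payoff \<mu> uS \<sigma> \<rho>1 = ?V" and E2: "payoff \<mu> uS \<sigma> \<rho>2 = ?V" using l0 l1 by auto
  have "ind \<sigma> \<rho>1 = ind \<sigma> \<rho>2"
    using unq opt_ind[OF inj pr1 R1 E1] opt_ind[OF inj pr2 R2 E2] by blast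
  then have "ind \<sigma> \<rho>1 $ (x, w0) = ind \<sigma> \<rho>2 $ (x, w0)" by simp
  moreover have "ind \<sigma> \<rho>1 $ (x, w0) = ind \<sigma> \<rho> $ (x, w0) + \<sigma> w0 m * (\<rho> m x * (0 - 1))"
    unfolding ind_comp \<rho>1_def using xy by (subst sum_upd_delta) simp
  moreover have "ind \<sigma> \<rho>2 $ (x, w0) = ind \<sigma> \<rho> $ (x, w0) + \<sigma> w0 m * (\<rho> m y * (1 - 0))"
    unfolding ind_comp \<rho>2_def using xy by (subst sum_upd_delta) simp
  ultimately have "\<sigma> w0 m * t = 0" by (simp add: t_def algebra_simps)
  then show False using sw tpos by simp
qed

lemma pert:
  fixes p :: "real^('a::finite \<times> 'w::finite)" and \<beta> :: "'w \<Rightarrow> 'a"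
  assumes pdef: "\<And>x v. p $ (x, v) = (if x = \<beta> v then 1 else 0)"
    and opt: "p \<in> optset \<mu> uS uR"
    and mpos: "\<forall>w. \<mu> w > 0"
    and g2: "\<forall>S z y. S \<noteq> {} \<longrightarrow> z \<noteq> y \<longrightarrow> (\<Sum>v\<in>S. \<mu> v * (uR z v - uR y v)) \<noteq> 0"
  shows "uS (\<beta> w') w \<le> uS (\<beta> w) w"
proof (rule ccontr)
  assume "\<not> ?thesis"
  then have lt: "uS (\<beta> w) w < uS (\<beta> w') w" by simp
  define x where "x = \<beta> w'"
  define b where "b = \<beta> w"
  have xb: "x \<noteq> b" using lt by (auto simp: x_def b_def)
  have pP: "p \<in> Pset \<mu> uR" and popt: "\<forall>q\<in>Pset \<mu> uR. cvec \<mu> uS \<bullet> q \<le> cvec \<mu> uS \<bullet> p"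
    using opt by (auto simp: optset_def)
  define Ob where "Ob z y = (\<Sum>v\<in>UNIV. \<mu> v * (uR z v - uR y v) * p $ (z, v))" for z y
  have Oge: "Ob z y \<ge> 0" for z y using pP by (simp add: Pset_iff Ob_def)
  have Ocell: "Ob z y = (\<Sum>v\<in>{v. \<beta> v = z}. \<mu> v * (uR z v - uR y v))" for z y
    unfolding Ob_def pdef by (simp add: sum.If_cases if_distrib[of "\<lambda>t. _ * t"] cong: if_cong) (rule sum.cong, auto)
  have Opos: "Ob z y > 0" if "z \<in> {x, b}" "y \<noteq> z" for z y
  proof -
    have "{v. \<beta> v = z} \<noteq> {}" using that by (auto simp: x_def b_def)
    then have "Ob z y \<noteq> 0" using g2 that(2) by (simp add: Ocell)
    then show ?thesis using Oge[of z y] by simp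
  qed
  define coef where "coef z y = \<mu> w * (uR z w - uR y w)" for z y
  define D where "D = {(z, y). z \<in> {x, b} \<and> y \<noteq> z}"
  define \<epsilon> where "\<epsilon> = Min (insert 1 ((\<lambda>(z, y). Ob z y / (\<bar>coef z y\<bar> + 1)) ` D))"
  have epos: "\<epsilon> > 0" unfolding \<epsilon>_def
    by (subst Min_gr_iff) (auto simp: D_def intro!: divide_pos_pos Opos add_nonneg_pos)
  have e1: "\<epsilon> \<le> 1" unfolding \<epsilon>_def by (intro Min_le) auto
  have ecoef: "\<epsilon> * \<bar>coef z y\<bar> \<le> Ob z y" if "z \<in> {x, b}" "y \<noteq> z" for z y
  proof -
    have "\<epsilon> \<le> Ob z y / (\<bar>coef z y\<bar> + 1)" unfolding \<epsilon>_def
      using that by (intro Min_le) (auto simp: D_def)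
    then have "\<epsilon> * (\<bar>coef z y\<bar> + 1) \<le> Ob z y"
      by (simp add: le_divide_eq add_nonneg_pos)
    then show ?thesis using epos by (simp add: algebra_simps)
  qed
  define dlt :: "real^('a \<times> 'w)" where "dlt = (\<chi> k. (if k = (x, w) then 1 else 0) - (if k = (b, w) then 1 else 0))"
  define q where "q = p + \<epsilon> *\<^sub>R dlt"
  have qc: "q $ (a, v) = p $ (a, v) + \<epsilon> * ((if (a, v) = (x, w) then 1 else 0) - (if (a, v) = (b, w) then 1 else 0))" for a v
    by (simp add: q_def dlt_def)
  have qP: "q \<in> Pset \<mu> uR"
    unfolding Pset_iff
  proof (intro conjI allI)
    fix j :: "'a \<times> 'w"
    obtain a v where j: "j = (a, v)" by (cases j)
    show "0 \<le> q $ j"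
    proof (cases "(a, v) = (b, w)")
      case True
      then show ?thesis using xb e1 by (simp add: j qc pdef b_def)
    next
      case False
      then show ?thesis using epos Pset_nonneg[OF pP, of "(a, v)"] by (simp add: j qc)
    qed
  next
    fix v
    have "(\<Sum>k\<in>{k. snd k = v}. q $ k) = (\<Sum>a\<in>UNIV. p $ (a, v)) + \<epsilon> * (\<Sum>a\<in>UNIV. ((if (a, v) = (x, w) then 1 else 0) - (if (a, v) = (b, w) then 1 else 0)))"
      by (simp add: sum_snd qc sum.distrib sum_distrib_left)
    also have "(\<Sum>a\<in>UNIV. ((if (a, v) = (x, w) then 1 else 0) - (if (a, v) = (b, w) then 1 else (0::real)))) = 0"
      by (cases "v = w") (simp_all add: sum_subtractf)
    also have "(\<Sum>a\<in>UNIV. p $ (a, v)) = 1" using Pset_sum[OF pP, of v] by (simp add: sum_snd)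
    finally show "(\<Sum>k\<in>{k. snd k = v}. q $ k) = 1" by simp
  next
    fix z y
    have eqO: "(\<Sum>v\<in>UNIV. \<mu> v * (uR z v - uR y v) * q $ (z, v)) = Ob z y + \<epsilon> * coef z y * ((if z = x then 1 else 0) - (if z = b then 1 else 0))"
    proof -
      have "(\<Sum>v\<in>UNIV. \<mu> v * (uR z v - uR y v) * q $ (z, v)) = Ob z y + \<epsilon> * (\<Sum>v\<in>UNIV. \<mu> v * (uR z v - uR y v) * ((if (z, v) = (x, w) then 1 else 0) - (if (z, v) = (b, w) then 1 else 0)))"
        unfolding Ob_def qc sum_distrib_left sum.distrib[symmetric] by (rule sum.cong) (auto simp: algebra_simps)
      also have "(\<Sum>v\<in>UNIV. \<mu> v * (uR z v - uR y v) * ((if (z, v) = (x, w) then 1 else 0) - (if (z, v) = (b, w) then 1 else 0)))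
          = coef z y * ((if z = x then 1 else 0) - (if z = b then 1 else 0))"
        by (simp add: coef_def right_diff_distrib sum_subtractf if_distrib[of "\<lambda>t. _ * t"] cong: if_cong)
      finally show ?thesis by (simp add: algebra_simps)
    qed
    show "0 \<le> (\<Sum>v\<in>UNIV. \<mu> v * (uR z v - uR y v) * q $ (z, v))"
    proof (cases "y = z")
      case True then show ?thesis by simp
    next
      case False
      show ?thesis
      proof (cases "z = x")
        case True
        have "\<epsilon> * (- coef z y) \<le> \<epsilon> * \<bar>coef z y\<bar>" using epos by (intro mult_left_mono) auto
        then have "- (\<epsilon> * coef z y) \<le> \<epsilon> * \<bar>coef z y\<bar>" by simp
        then show ?thesis unfolding eqO using True xb ecoef[of z y] False by auto
      next
        case zx: False
        show ?thesis
        proof (cases "z = b")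
          case True
          have "\<epsilon> * coef z y \<le> \<epsilon> * \<bar>coef z y\<bar>" using epos by (simp add: mult_left_mono)
          then show ?thesis unfolding eqO using True zx ecoef[of z y] False by auto
        next
          case False
          then show ?thesis unfolding eqO using zx Oge[of z y] by simp
        qed
      qed
    qed
  qed
  have "cvec \<mu> uS \<bullet> q = cvec \<mu> uS \<bullet> p + \<epsilon> * (\<mu> w * uS x w - \<mu> w * uS b w)"
  proof -
    have "cvec \<mu> uS \<bullet> dlt = \<mu> w * uS x w - \<mu> w * uS b w"
      unfolding cvec_inner dlt_def
      by (simp add: right_diff_distrib sum_subtractf if_distrib[of "\<lambda>t. _ * t"] cong: if_cong)
    then show ?thesis by (simp add: q_def inner_add_right)
  qed
  moreover have "\<mu> w * uS b w < \<mu> w * uS x w" using lt mpos by (simp add: x_def b_def)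
  ultimately have "cvec \<mu> uS \<bullet> q > cvec \<mu> uS \<bullet> p" using epos by simp
  then show False using popt qP by fastforce
qed

lemma exists_pos_act: "action_strategy \<rho> \<Longrightarrow> \<exists>x. \<rho> m x > 0"
proof (rule ccontr)
  assume a: "action_strategy \<rho>" and "\<not> (\<exists>x. \<rho> m x > 0)"
  then have "\<forall>x. \<rho> m x = 0" using a unfolding action_strategy_def by (metis less_eq_real_def)
  then have "(\<Sum>x\<in>UNIV. \<rho> m x) = 0" by simp
  with a show False by (simp add: action_strategy_def)
qed

lemma exists_pos_msg: "messaging_strategy \<sigma> \<Longrightarrow> \<exists>m. \<sigma> w m > 0"
proof (rule ccontr)
  assume a: "messaging_strategy \<sigma>" and "\<not> (\<exists>m. \<sigma> w m > 0)"
  then have "\<forall>m. \<sigma> w m = 0" using a unfolding messaging_strategy_def by (metis less_eq_real_def)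
  then have "(\<Sum>m\<in>UNIV. \<sigma> w m) = 0" by simp
  with a show False by (simp add: messaging_strategy_def)
qed

lemma pure_of:
  assumes a: "action_strategy \<rho>" and u: "\<And>z. \<rho> m z > 0 \<Longrightarrow> z = b"
  shows "\<rho> m z = (if z = b then 1 else 0)"
proof -
  have z0: "\<rho> m z = 0" if "z \<noteq> b" for z
    using u[of z] that a unfolding action_strategy_def by (metis less_eq_real_def)
  have "1 = (\<Sum>z\<in>UNIV. \<rho> m z)" using a by (simp add: action_strategy_def)
  also have "\<dots> = (\<Sum>z\<in>UNIV. if z = b then \<rho> m b else 0)" by (rule sum.cong) (auto simp: z0)
  also have "\<dots> = \<rho> m b" by simp
  finally show ?thesis using z0 by auto
qed

lemma ct_to_part:
  fixes e :: "'a::finite \<Rightarrow> 'm::finite" and \<sigma> :: "'w::finite \<Rightarrow> 'm \<Rightarrow> real" and \<rho> :: "'m \<Rightarrow> 'a \<Rightarrow> real"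
    and uR uS :: "'a \<Rightarrow> 'w \<Rightarrow> real"
  assumes inj: "inj e" and unq: "\<forall>p1 p2. p1 \<in> optset \<mu> uS uR \<longrightarrow> p2 \<in> optset \<mu> uS uR \<longrightarrow> p1 = p2"
    and mpos: "\<forall>w. \<mu> w > 0"
    and g1: "\<forall>w a a'. a \<noteq> a' \<longrightarrow> uS a w \<noteq> uS a' w"
    and pr: "profile \<sigma> \<rho>" and sb: "S_BR \<mu> uS \<sigma> \<rho>" and rb: "R_BR \<mu> uR \<sigma> \<rho>"
    and eq: "payoff \<mu> uS \<sigma> \<rho> = persuasion_payoff TYPE('m) \<mu> uS uR"
  shows "\<exists>\<sigma>' (\<rho>' :: 'm \<Rightarrow> 'a \<Rightarrow> real). profile \<sigma>' \<rho>' \<and> R_BR \<mu> uR \<sigma>' \<rho>' \<and> partitional \<sigma>' \<and>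
     payoff \<mu> uS \<sigma>' \<rho>' = persuasion_payoff TYPE('m) \<mu> uS uR"
proof -
  have r: "action_strategy \<rho>" and s: "messaging_strategy \<sigma>" using pr by (auto simp: profile_def)
  define b where "b m = (SOME x. \<rho> m x > 0)" for m
  have bpos: "\<rho> m (b m) > 0" for m unfolding b_def using exists_pos_act[OF r] by (rule someI_ex)
  have pure: "\<rho> m z = (if z = b m then 1 else 0)" if "\<sigma> w m > 0" for w m z
  proof (rule pure_of[OF r])
    fix z assume "\<rho> m z > 0"
    then show "z = b m" using no_mix[OF inj unq pr rb eq that _ bpos] by blast
  qed
  have hpure: "hS uS \<rho> w m = uS (b m) w" if "\<sigma> w m > 0" for w m
    unfolding hS_def using pure[OF that] by (simp add: if_distrib[of "\<lambda>t. t * _"] cong: if_cong)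
  have same: "b m = b m'" if "\<sigma> w m > 0" "\<sigma> w m' > 0" for w m m'
  proof -
    have "hS uS \<rho> w m' \<le> hS uS \<rho> w m" "hS uS \<rho> w m \<le> hS uS \<rho> w m'"
      using SBR_nec[OF s sb that(1)] SBR_nec[OF s sb that(2)] mpos by auto
    then have "uS (b m) w = uS (b m') w" using hpure[OF that(1)] hpure[OF that(2)] by simp
    then show ?thesis using g1 by blast
  qed
  define f where "f w = (SOME m. \<sigma> w m > 0)" for w
  have fpos: "\<sigma> w (f w) > 0" for w unfolding f_def using exists_pos_msg[OF s] by (rule someI_ex)
  define \<beta> where "\<beta> w = b (f w)" for w
  have indp: "ind \<sigma> \<rho> $ (x, w) = (if x = \<beta> w then 1 else 0)" for x w
  proof -
    have "ind \<sigma> \<rho> $ (x, w) = (\<Sum>m\<in>UNIV. \<sigma> w m * (if x = \<beta> w then 1 else 0))"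
      unfolding ind_comp
    proof (rule sum.cong[OF refl])
      fix m
      show "\<sigma> w m * \<rho> m x = \<sigma> w m * (if x = \<beta> w then 1 else 0)"
      proof (cases "\<sigma> w m > 0")
        case True
        then show ?thesis using pure[OF True, of x] same[OF True fpos[of w]] by (simp add: \<beta>_def)
      next
        case False
        then have "\<sigma> w m = 0" using s unfolding messaging_strategy_def by (metis less_eq_real_def)
        then show ?thesis by simp
      qed
    qed
    also have "\<dots> = (if x = \<beta> w then 1 else 0)"
      using s by (simp add: sum_distrib_right[symmetric] messaging_strategy_def)
    finally show ?thesis .
  qed
  define p where "p = ind \<sigma> \<rho>"
  have pP: "p \<in> Pset \<mu> uR" unfolding p_def by (rule RBR_opt[OF pr rb])
  have supp: "\<forall>a w. p $ (a, w) \<noteq> 0 \<longrightarrow> a \<in> UNIV" by simp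
  have part: "partitional (sigp e p)"
    unfolding partitional_def
  proof
    fix w
    have "sigp e p w (e (\<beta> w)) = 1" using sigp_e[OF inj, of p w "\<beta> w"] indp by (simp add: p_def)
    then show "\<exists>m. sigp e p w m = 1" by blast
  qed
  show ?thesis
  proof (intro exI conjI)
    show "profile (sigp e p) (rhop e UNIV undefined)" by (rule realize_profile[OF pP])
    show "R_BR \<mu> uR (sigp e p) (rhop e UNIV undefined)" by (rule realize_RBR[OF inj pP supp])
    show "partitional (sigp e p)" by (rule part)
    show "payoff \<mu> uS (sigp e p) (rhop e UNIV undefined) = persuasion_payoff TYPE('m) \<mu> uS uR"
      using realize_pay[OF inj supp] eq by (simp add: p_def pay_ind)
  qed
qed

lemma msg_pure:
  assumes s: "messaging_strategy \<sigma>" and one: "\<sigma> w m0 = 1"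
  shows "\<sigma> w m = (if m = m0 then 1 else 0)"
proof -
  have "(\<Sum>m\<in>UNIV. \<sigma> w m) = \<sigma> w m0 + (\<Sum>m\<in>UNIV - {m0}. \<sigma> w m)" by (simp add: sum.remove)
  then have "(\<Sum>m\<in>UNIV - {m0}. \<sigma> w m) = 0" using s one by (simp add: messaging_strategy_def)
  then have "\<forall>m\<in>UNIV - {m0}. \<sigma> w m = 0"
    using s by (subst (asm) sum_nonneg_eq_0_iff) (auto simp: messaging_strategy_def)
  then show ?thesis using one by auto
qed

lemma hS_rhop:
  fixes uS :: "'a::finite \<Rightarrow> 'w \<Rightarrow> real"
  shows "hS uS (rhop e Sa d) w m = uS (actf e Sa d m) w"
  unfolding hS_def rhop_def by (simp add: if_distrib[of "\<lambda>t. t * _"] cong: if_cong)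

lemma part_to_ct:
  fixes e :: "'a::finite \<Rightarrow> 'm::finite" and \<sigma> :: "'w::finite \<Rightarrow> 'm \<Rightarrow> real" and \<rho> :: "'m \<Rightarrow> 'a \<Rightarrow> real"
    and uR uS :: "'a \<Rightarrow> 'w \<Rightarrow> real"
  assumes inj: "inj e" and unq: "\<forall>p1 p2. p1 \<in> optset \<mu> uS uR \<longrightarrow> p2 \<in> optset \<mu> uS uR \<longrightarrow> p1 = p2"
    and mpos: "\<forall>w. \<mu> w > 0"
    and g2: "\<forall>S z y. S \<noteq> {} \<longrightarrow> z \<noteq> y \<longrightarrow> (\<Sum>v\<in>S. \<mu> v * (uR z v - uR y v)) \<noteq> 0"
    and pr: "profile \<sigma> \<rho>" and rb: "R_BR \<mu> uR \<sigma> \<rho>" and part: "partitional \<sigma>"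
    and eq: "payoff \<mu> uS \<sigma> \<rho> = persuasion_payoff TYPE('m) \<mu> uS uR"
  shows "\<exists>\<sigma>' (\<rho>' :: 'm \<Rightarrow> 'a \<Rightarrow> real). profile \<sigma>' \<rho>' \<and> S_BR \<mu> uS \<sigma>' \<rho>' \<and> R_BR \<mu> uR \<sigma>' \<rho>' \<and>
     payoff \<mu> uS \<sigma>' \<rho>' = persuasion_payoff TYPE('m) \<mu> uS uR"
proof -
  have r: "action_strategy \<rho>" and s: "messaging_strategy \<sigma>" using pr by (auto simp: profile_def)
  define f where "f w = (SOME m. \<sigma> w m = 1)" for w
  have f1: "\<sigma> w (f w) = 1" for w unfolding f_def using part by (auto simp: partitional_def intro: someI_ex)
  have spure: "\<sigma> w m = (if m = f w then 1 else 0)" for w m by (rule msg_pure[OF s f1])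
  define b where "b m = (SOME x. \<rho> m x > 0)" for m
  have bpos: "\<rho> m (b m) > 0" for m unfolding b_def using exists_pos_act[OF r] by (rule someI_ex)
  define \<beta> where "\<beta> w = b (f w)" for w
  have rpure: "\<rho> (f w) z = (if z = \<beta> w then 1 else 0)" for w z
    unfolding \<beta>_def
  proof (rule pure_of[OF r])
    fix z assume "\<rho> (f w) z > 0"
    then show "z = b (f w)" using no_mix[OF inj unq pr rb eq _ _ bpos, of w] f1[of w] by simp
  qed
  have indp: "ind \<sigma> \<rho> $ (x, w) = (if x = \<beta> w then 1 else 0)" for x w
  proof -
    have "ind \<sigma> \<rho> $ (x, w) = (\<Sum>m\<in>UNIV. if m = f w then \<rho> m x else 0)"
      unfolding ind_comp spure by (rule sum.cong) auto
    also have "\<dots> = \<rho> (f w) x" by simp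
    finally show ?thesis by (simp add: rpure)
  qed
  define p where "p = ind \<sigma> \<rho>"
  have popt: "p \<in> optset \<mu> uS uR" unfolding p_def by (rule opt_ind[OF inj pr rb eq])
  then have pP: "p \<in> Pset \<mu> uR" by (simp add: optset_def)
  have pdef: "p $ (x, v) = (if x = \<beta> v then 1 else 0)" for x v by (simp add: p_def indp)
  have IC: "uS (\<beta> w') w \<le> uS (\<beta> w) w" for w w'
    by (rule pert[OF pdef popt mpos g2])
  define Sa where "Sa = range \<beta>"
  define d where "d = \<beta> undefined"
  have supp: "\<forall>a w. p $ (a, w) \<noteq> 0 \<longrightarrow> a \<in> Sa" by (auto simp: pdef Sa_def split: if_splits)
  have sig: "sigp e p w m = (if m = e (\<beta> w) then 1 else 0)" for w m
  proof -
    have "sigp e p w m = (\<Sum>a\<in>UNIV. if a = \<beta> w then (if e a = m then 1 else 0) else 0)"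
      unfolding sigp_def pdef by (rule sum.cong) auto
    then show ?thesis by auto
  qed
  have SB: "S_BR \<mu> uS (sigp e p) (rhop e Sa d)"
  proof (rule SBR_suff[OF sigp_strategy[OF pP]])
    show "\<And>w. 0 \<le> \<mu> w" using mpos by (simp add: less_imp_le)
    fix w m m' assume "sigp e p w m > 0"
    then have m: "m = e (\<beta> w)" by (simp add: sig split: if_splits)
    have am: "actf e Sa d m = \<beta> w" unfolding m by (rule actf_e[OF inj]) (simp add: Sa_def)
    obtain w'' where "actf e Sa d m' = \<beta> w''" using actf_in[OF inj, of Sa d m'] by (auto simp: Sa_def d_def)
    then show "hS uS (rhop e Sa d) w m' \<le> hS uS (rhop e Sa d) w m"
      unfolding hS_rhop am using IC by simp
  qed
  show ?thesis
  proof (intro exI conjI)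
    show "profile (sigp e p) (rhop e Sa d)" by (rule realize_profile[OF pP])
    show "S_BR \<mu> uS (sigp e p) (rhop e Sa d)" by (rule SB)
    show "R_BR \<mu> uR (sigp e p) (rhop e Sa d)" by (rule realize_RBR[OF inj pP supp])
    show "payoff \<mu> uS (sigp e p) (rhop e Sa d) = persuasion_payoff TYPE('m) \<mu> uS uR"
      using realize_pay[OF inj supp] eq by (simp add: p_def pay_ind)
  qed
qed

lemma babble:
  fixes e :: "'a::finite \<Rightarrow> 'm::finite" and uR uS :: "'a \<Rightarrow> 'w::finite \<Rightarrow> real"
  assumes inj: "inj e" and mpos: "\<forall>w. \<mu> w > 0"
  shows "\<exists>(\<sigma> :: 'w \<Rightarrow> 'm \<Rightarrow> real) \<rho>. profile \<sigma> \<rho> \<and> S_BR \<mu> uS \<sigma> \<rho> \<and> R_BR \<mu> uR \<sigma> \<rho> \<and> partitional \<sigma>"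
proof -
  define G where "G x = (\<Sum>w\<in>UNIV. \<mu> w * uR x w)" for x
  obtain b where b: "\<And>y. G y \<le> G b"
  proof -
    have "Max (range G) \<in> range G" by (rule Max_in) auto
    then obtain b where bm: "G b = Max (range G)" by (metis rangeE)
    show ?thesis
    proof (rule that)
      fix y
      have "G y \<le> Max (range G)" by (rule Max_ge) auto
      then show "G y \<le> G b" using bm by simp
    qed
  qed
  define p :: "real^('a \<times> 'w)" where "p = (\<chi> k. if fst k = b then 1 else 0)"
  have pc: "p $ (x, w) = (if x = b then 1 else 0)" for x w by (simp add: p_def)
  have pP: "p \<in> Pset \<mu> uR"
    unfolding Pset_iff
  proof (intro conjI allI)
    fix j :: "'a \<times> 'w" show "0 \<le> p $ j" by (simp add: p_def)
  next
    fix w show "(\<Sum>k\<in>{k. snd k = w}. p $ k) = 1" by (simp add: sum_snd pc)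
  next
    fix x y
    show "0 \<le> (\<Sum>w\<in>UNIV. \<mu> w * (uR x w - uR y w) * p $ (x, w))"
    proof (cases "x = b")
      case True
      have "0 \<le> G b - G y" using b[of y] by simp
      also have "G b - G y = (\<Sum>w\<in>UNIV. \<mu> w * (uR x w - uR y w) * p $ (x, w))"
        using True by (simp add: G_def pc sum_subtractf algebra_simps)
      finally show ?thesis .
    qed (simp add: pc)
  qed
  have supp: "\<forall>a w. p $ (a, w) \<noteq> 0 \<longrightarrow> a \<in> {b}" by (simp add: pc)
  have sig: "sigp e p w m = (if m = e b then 1 else 0)" for w m
  proof -
    have "sigp e p w m = (\<Sum>a\<in>UNIV. if a = b then (if e a = m then 1 else 0) else 0)"
      unfolding sigp_def pc by (rule sum.cong) auto
    then show ?thesis by auto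
  qed
  show ?thesis
  proof (intro exI conjI)
    show "profile (sigp e p) (rhop e {b} b)" by (rule realize_profile[OF pP])
    show "R_BR \<mu> uR (sigp e p) (rhop e {b} b)" by (rule realize_RBR[OF inj pP supp])
    show "S_BR \<mu> uS (sigp e p) (rhop e {b} b)"
    proof (rule SBR_suff[OF sigp_strategy[OF pP]])
      show "\<And>w. 0 \<le> \<mu> w" using mpos by (simp add: less_imp_le)
      fix w m m'
      have "actf e {b} b m' = b" "actf e {b} b m = b" using actf_in[OF inj, of "{b}" b] by auto
      then show "hS uS (rhop e {b} b) w m' \<le> hS uS (rhop e {b} b) w m" by (simp add: hS_rhop)
    qed
    show "partitional (sigp e p)" unfolding partitional_def sig by auto
  qed
qed

lemma main_equiv:
  fixes \<mu> :: "'w::finite \<Rightarrow> real" and uR uS :: "'a::finite \<Rightarrow> 'w \<Rightarrow> real"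
  assumes card: "CARD('m::finite) > CARD('a)"
    and mpos: "\<forall>w. \<mu> w > 0"
    and g1: "\<forall>w a a'. a \<noteq> a' \<longrightarrow> uS a w \<noteq> uS a' w"
    and g2: "\<forall>S z y. S \<noteq> {} \<longrightarrow> z \<noteq> y \<longrightarrow> (\<Sum>v\<in>S. \<mu> v * (uR z v - uR y v)) \<noteq> 0"
    and unq: "\<forall>p1 p2. p1 \<in> optset \<mu> uS uR \<longrightarrow> p2 \<in> optset \<mu> uS uR \<longrightarrow> p1 = p2"
  shows "commitment_valuable TYPE('m) \<mu> uS uR \<longleftrightarrow> values_randomization TYPE('m) \<mu> uS uR"
proof -
  obtain e :: "'a \<Rightarrow> 'm" where inj: "inj e"
  proof -
    have "card (UNIV :: 'a set) \<le> card (UNIV :: 'm set)" using card by simp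
    then obtain e :: "'a \<Rightarrow> 'm" where "inj_on e UNIV" using card_le_inj[of "UNIV :: 'a set" "UNIV :: 'm set"] by auto
    then show ?thesis using that by blast
  qed
  let ?V = "persuasion_payoff TYPE('m) \<mu> uS uR"
  let ?VP = "partitional_persuasion_payoff TYPE('m) \<mu> uS uR"
  let ?VC = "cheap_talk_payoff TYPE('m) \<mu> uS uR"
  let ?Pers = "{payoff \<mu> uS \<sigma> \<rho> | (\<sigma> :: 'w \<Rightarrow> 'm \<Rightarrow> real) \<rho>. profile \<sigma> \<rho> \<and> R_BR \<mu> uR \<sigma> \<rho>}"
  let ?Part = "{payoff \<mu> uS \<sigma> \<rho> | (\<sigma> :: 'w \<Rightarrow> 'm \<Rightarrow> real) \<rho>. profile \<sigma> \<rho> \<and> R_BR \<mu> uR \<sigma> \<rho> \<and> partitional \<sigma>}"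
  let ?CT = "{payoff \<mu> uS \<sigma> \<rho> | (\<sigma> :: 'w \<Rightarrow> 'm \<Rightarrow> real) \<rho>. profile \<sigma> \<rho> \<and> S_BR \<mu> uS \<sigma> \<rho> \<and> R_BR \<mu> uR \<sigma> \<rho>}"
  have bP: "bdd_above ?Pers" by (rule bdd_pers)
  obtain \<sigma>0 :: "'w \<Rightarrow> 'm \<Rightarrow> real" and \<rho>0 where b0: "profile \<sigma>0 \<rho>0" "S_BR \<mu> uS \<sigma>0 \<rho>0" "R_BR \<mu> uR \<sigma>0 \<rho>0" "partitional \<sigma>0"
    using babble[OF inj mpos, of uS uR] by blast
  have subPart: "?Part \<subseteq> ?Pers" by blast
  have subCT: "?CT \<subseteq> ?Pers" by blast
  have bPart: "bdd_above ?Part" by (rule bdd_above_mono[OF bP subPart])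
  have bCT: "bdd_above ?CT" by (rule bdd_above_mono[OF bP subCT])
  have VPV: "?VP \<le> ?V" unfolding partitional_persuasion_payoff_def persuasion_payoff_def
    by (rule cSup_subset_mono[OF _ bP subPart]) (use b0 in blast)
  have VCV: "?VC \<le> ?V" unfolding cheap_talk_payoff_def persuasion_payoff_def
    by (rule cSup_subset_mono[OF _ bP subCT]) (use b0 in blast)
  obtain \<sigma>p :: "'w \<Rightarrow> 'm \<Rightarrow> real" and \<rho>p where
    Pp: "profile \<sigma>p \<rho>p \<and> R_BR \<mu> uR \<sigma>p \<rho>p \<and> partitional \<sigma>p"
    and Pmax: "\<forall>(\<sigma>' :: 'w \<Rightarrow> 'm \<Rightarrow> real) \<rho>'. profile \<sigma>' \<rho>' \<and> R_BR \<mu> uR \<sigma>' \<rho>' \<and> partitional \<sigma>' \<longrightarrow> payoff \<mu> uS \<sigma>' \<rho>' \<le> payoff \<mu> uS \<sigma>p \<rho>p"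
  proof -
    have "\<exists>(\<sigma> :: 'w \<Rightarrow> 'm \<Rightarrow> real) \<rho>. (profile \<sigma> \<rho> \<and> R_BR \<mu> uR \<sigma> \<rho> \<and> partitional \<sigma>) \<and> (\<forall>(\<sigma>' :: 'w \<Rightarrow> 'm \<Rightarrow> real) \<rho>'. profile \<sigma>' \<rho>' \<and> R_BR \<mu> uR \<sigma>' \<rho>' \<and> partitional \<sigma>' \<longrightarrow> payoff \<mu> uS \<sigma>' \<rho>' \<le> payoff \<mu> uS \<sigma> \<rho>)"
    proof (rule attain[where Q = "\<lambda>(\<sigma> :: 'w \<Rightarrow> 'm \<Rightarrow> real) (\<rho> :: 'm \<Rightarrow> 'a \<Rightarrow> real). profile \<sigma> \<rho> \<and> R_BR \<mu> uR \<sigma> \<rho> \<and> partitional \<sigma>"])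
      show "closed {v :: real^(('w \<times> 'm) + ('m \<times> 'a)). profile (sig_of v) (rho_of v) \<and> R_BR \<mu> uR (sig_of v) (rho_of v) \<and> partitional (sig_of v)}"
        by (rule closed_part)
      show "profile \<sigma>0 \<rho>0 \<and> R_BR \<mu> uR \<sigma>0 \<rho>0 \<and> partitional \<sigma>0" using b0 by auto
    qed auto
    then show ?thesis using that by blast
  qed
  have VPeq: "?VP = payoff \<mu> uS \<sigma>p \<rho>p" unfolding partitional_persuasion_payoff_def
    by (rule cSup_eq_maximum) (use Pp Pmax in blast)+
  obtain \<sigma>c :: "'w \<Rightarrow> 'm \<Rightarrow> real" and \<rho>c where
    Cp: "profile \<sigma>c \<rho>c \<and> S_BR \<mu> uS \<sigma>c \<rho>c \<and> R_BR \<mu> uR \<sigma>c \<rho>c"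
    and Cmax: "\<forall>(\<sigma>' :: 'w \<Rightarrow> 'm \<Rightarrow> real) \<rho>'. profile \<sigma>' \<rho>' \<and> S_BR \<mu> uS \<sigma>' \<rho>' \<and> R_BR \<mu> uR \<sigma>' \<rho>' \<longrightarrow> payoff \<mu> uS \<sigma>' \<rho>' \<le> payoff \<mu> uS \<sigma>c \<rho>c"
  proof -
    have "\<exists>(\<sigma> :: 'w \<Rightarrow> 'm \<Rightarrow> real) \<rho>. (profile \<sigma> \<rho> \<and> S_BR \<mu> uS \<sigma> \<rho> \<and> R_BR \<mu> uR \<sigma> \<rho>) \<and> (\<forall>(\<sigma>' :: 'w \<Rightarrow> 'm \<Rightarrow> real) \<rho>'. profile \<sigma>' \<rho>' \<and> S_BR \<mu> uS \<sigma>' \<rho>' \<and> R_BR \<mu> uR \<sigma>' \<rho>' \<longrightarrow> payoff \<mu> uS \<sigma>' \<rho>' \<le> payoff \<mu> uS \<sigma> \<rho>)"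
    proof (rule attain[where Q = "\<lambda>(\<sigma> :: 'w \<Rightarrow> 'm \<Rightarrow> real) (\<rho> :: 'm \<Rightarrow> 'a \<Rightarrow> real). profile \<sigma> \<rho> \<and> S_BR \<mu> uS \<sigma> \<rho> \<and> R_BR \<mu> uR \<sigma> \<rho>"])
      show "closed {v :: real^(('w \<times> 'm) + ('m \<times> 'a)). profile (sig_of v) (rho_of v) \<and> S_BR \<mu> uS (sig_of v) (rho_of v) \<and> R_BR \<mu> uR (sig_of v) (rho_of v)}"
        by (rule closed_ct)
      show "profile \<sigma>0 \<rho>0 \<and> S_BR \<mu> uS \<sigma>0 \<rho>0 \<and> R_BR \<mu> uR \<sigma>0 \<rho>0" using b0 by auto
    qed auto
    then show ?thesis using that by blast
  qed
  have VCeq: "?VC = payoff \<mu> uS \<sigma>c \<rho>c" unfolding cheap_talk_payoff_def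
    by (rule cSup_eq_maximum) (use Cp Cmax in blast)+
  have A: "?V = ?VC" if "?V = ?VP"
  proof -
    have "payoff \<mu> uS \<sigma>p \<rho>p = ?V" using that VPeq by simp
    then obtain \<sigma>' :: "'w \<Rightarrow> 'm \<Rightarrow> real" and \<rho>' where
      c: "profile \<sigma>' \<rho>'" "S_BR \<mu> uS \<sigma>' \<rho>'" "R_BR \<mu> uR \<sigma>' \<rho>'" "payoff \<mu> uS \<sigma>' \<rho>' = ?V"
      using part_to_ct[OF inj unq mpos g2] Pp by blast
    have "payoff \<mu> uS \<sigma>' \<rho>' \<le> ?VC" unfolding cheap_talk_payoff_def
      by (rule cSup_upper[OF _ bCT]) (use c in blast)
    then show ?thesis using c(4) VCV by simp
  qed
  have B: "?V = ?VP" if "?V = ?VC"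
  proof -
    have "payoff \<mu> uS \<sigma>c \<rho>c = ?V" using that VCeq by simp
    then obtain \<sigma>' :: "'w \<Rightarrow> 'm \<Rightarrow> real" and \<rho>' where
      c: "profile \<sigma>' \<rho>'" "R_BR \<mu> uR \<sigma>' \<rho>'" "partitional \<sigma>'" "payoff \<mu> uS \<sigma>' \<rho>' = ?V"
      using ct_to_part[OF inj unq mpos g1] Cp by blast
    have "payoff \<mu> uS \<sigma>' \<rho>' \<le> ?VP" unfolding partitional_persuasion_payoff_def
      by (rule cSup_upper[OF _ bPart]) (use c in blast)
    then show ?thesis using c(4) VPV by simp
  qed
  show ?thesis unfolding commitment_valuable_def values_randomization_def
    using A B VPV VCV by linarith
qed

theorem theorem1:
  fixes \<mu>0 :: "'w::finite \<Rightarrow> real"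
  assumes "\<forall>w. \<mu>0 w > 0"
    and "(\<Sum>w\<in>UNIV. \<mu>0 w) = 1"
    and "CARD('m::finite) > max CARD('w) CARD('a::finite)"
  shows "\<exists>E \<in> sets (PiM (UNIV :: (bool \<times> 'a \<times> 'w) set) (\<lambda>_. lborel)).
           E \<subseteq> {e. \<forall>i. e i \<in> {0..1}} \<and>
           emeasure (PiM (UNIV :: (bool \<times> 'a \<times> 'w) set) (\<lambda>_. lborel)) E = 1 \<and>
           (\<forall>e\<in>E. commitment_valuable TYPE('m) \<mu>0 (env_S e) (env_R e)
                   \<longleftrightarrow> values_randomization TYPE('m) \<mu>0 (env_S e) (env_R e))"
proof -
  obtain E where E: "E \<in> sets (PiM (UNIV :: (bool \<times> 'a \<times> 'w) set) (\<lambda>_. lborel))"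
    "E \<subseteq> {e. \<forall>i. e i \<in> {0..1}}" "emeasure (PiM (UNIV :: (bool \<times> 'a \<times> 'w) set) (\<lambda>_. lborel)) E = 1"
    "\<forall>e\<in>E. gen \<mu>0 e"
    using gen_ex[OF assms(1)] by blast
  have card: "CARD('m) > CARD('a)" using assms(3) by simp
  have "commitment_valuable TYPE('m) \<mu>0 (env_S e) (env_R e)
                   \<longleftrightarrow> values_randomization TYPE('m) \<mu>0 (env_S e) (env_R e)" if "e \<in> E" for e
  proof -
    have g: "gen \<mu>0 e" using E(4) that by blast
    show ?thesis
      by (rule main_equiv[OF card assms(1)]) (use g in \<open>auto simp: gen_def\<close>)
  qed
  then show ?thesis using E by blast
qed

end
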